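(* Let $n\ge 2$ and $[n]=\{1,2,\ldots,n\}$. Call an $n\times n$ matrix with entries in $\{0,1\}$ a $\Lambda_n^2$-matrix if every row and every column contains exactly two entries equal to $1$. Let $\mathcal D_n$ be the set of all data $\Delta$ of the following form: \begin{enumerate} \item a tuple $(x_2,\ldots,x_n)$ of nonnegative integers with $2x_2+3x_3+\cdots+nx_n=n$; \item an ordered pair $(\mathbf C,\mathbf A)$ of partitions of $[n]$, each having exactly $x_k$ blocks of cardinality $k$ for every $k=2,\ldots,n$ (and hence no blocks of size $1$). For each $k$ with $x_k\neq 0$, the size-$k$ blocks of $\mathbf C$ are listed as $C^{(k)}_1,\ldots,C^{(k)}_{x_k}$ and those of $\mathbf A$ as $A^{(k)}_1,\ldots,A^{(k)}_{x_k}$, each list in a fixed order determined by the partition (for instance, increasing order of the least elements of the blocks); \item for each $k$ with $x_k\neq 0$, a permutation $\rho_k\in S_{x_k}$; \item for each such $k$ and each $i=1,\ldots,x_k$: \begin{itemize} \item an ordering $c_2,c_3,\ldots,c_k$ of the set $C^{(k)}_i\setminus\{c_1\}$, where $c_1=\min C^{(k)}_i$; \item an ordering $a_1,a_2,\ldots,a_k$ of the set $A^{(k)}_{\rho_k(i)}$ satisfying $a_1<a_2$. \end{itemize} \end{enumerate} To such data $\Delta$ associate the set $R(\Delta)$ of triples consisting of \[ (c_1,a_1,a_2),\ (c_2,a_2,a_3),\ \ldots,\ (c_{k-1},a_{k-1},a_k),\ (c_k,a_k,a_1), \] taken over all $k$ with $x_k\neq 0$ and all $i=1,\ldots,x_k$,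 where the $c_j$ and $a_j$ are those chosen for the pair $(k,i)$. Let $\Phi(\Delta)$ be the $n\times n$ binary matrix whose column $c$ has its entries equal to $1$ exactly in rows $u$ and $v$, where $(c,u,v)$ is a triple in $R(\Delta)$. Then: \begin{itemize} \item for every $\Delta\in\mathcal D_n$, the matrix $\Phi(\Delta)$ is a well-defined $\Lambda_n^2$-matrix; \item distinct data $\Delta\neq\Delta'$ give distinct matrices $\Phi(\Delta)\neq\Phi(\Delta')$; \item every $\Lambda_n^2$-matrix equals $\Phi(\Delta)$ for some $\Delta\in\mathcal D_n$. \end{itemize} Thus $\Phi$ is a bijection from $\mathcal D_n$ onto the set of all $\Lambda_n^2$-matrices.
   Context: $S_m$ denotes the symmetric group on $\{1,\ldots,m\}$. A partition of a set $M$ is a family of pairwise disjoint subsets, called blocks, whose union is $M$. "Well-defined" in the claim means that every $c\in[n]$ occurs as the first coordinate of exactly one triple in $R(\Delta)$, and that triple has $u\neq v$. *)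

theory Defs
  imports "HOL-Library.Disjoint_Sets" "HOL-Combinatorics.Permutations"
begin

text \<open>Lambda_n^2 matrices: M r c is the entry in row r, column c (indices in {1..n});
  entries outside [n] x [n] are 0, so that matrices are compared as functions.\<close>
definition Lambda2 :: "nat \<Rightarrow> (nat \<Rightarrow> nat \<Rightarrow> nat) set" where
  "Lambda2 n = {M. (\<forall>r c. M r c \<in> {0,1}) \<and>
      (\<forall>r c. (r \<notin> {1..n} \<or> c \<notin> {1..n}) \<longrightarrow> M r c = 0) \<and>
      (\<forall>r\<in>{1..n}. card {c\<in>{1..n}. M r c = 1} = 2) \<and>
      (\<forall>c\<in>{1..n}. card {r\<in>{1..n}. M r c = 1} = 2)}"

text \<open>Field meanings:
  xs k       = x_k (k = 2..n; 0 for other k),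
  CP, AP     = the partitions C and A of [n],
  rho k      = the permutation rho_k of {1..x_k} (identity when x_k = 0),
  cord k i   = the list [c_2,...,c_k] for block C^(k)_i,
  aord k i   = the list [a_1,...,a_k] ordering A^(k)_(rho_k i)
  (cord/aord are [] for pairs (k,i) that do not occur).\<close>
record data =
  xs :: "nat \<Rightarrow> nat"
  CP :: "nat set set"
  AP :: "nat set set"
  rho :: "nat \<Rightarrow> nat \<Rightarrow> nat"
  cord :: "nat \<Rightarrow> nat \<Rightarrow> nat list"
  aord :: "nat \<Rightarrow> nat \<Rightarrow> nat list"

definition blk :: "nat set set \<Rightarrow> nat \<Rightarrow> nat \<Rightarrow> nat set" where
  "blk P k i = sorted_key_list_of_set Min {B\<in>P. card B = k} ! (i - 1)"

definition Dn :: "nat \<Rightarrow> data set" where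
  "Dn n = {D.
     (\<forall>k. k \<notin> {2..n} \<longrightarrow> xs D k = 0) \<and>
     (\<Sum>k=2..n. k * xs D k) = n \<and>
     partition_on {1..n} (CP D) \<and> partition_on {1..n} (AP D) \<and>
     (\<forall>k\<in>{2..n}. card {B\<in>CP D. card B = k} = xs D k) \<and>
     (\<forall>k\<in>{2..n}. card {B\<in>AP D. card B = k} = xs D k) \<and>
     (\<forall>k. rho D k permutes {1..xs D k}) \<and>
     (\<forall>k i. if k \<in> {2..n} \<and> i \<in> {1..xs D k}
        then distinct (cord D k i) \<and>
             set (cord D k i) = blk (CP D) k i - {Min (blk (CP D) k i)} \<and>
             distinct (aord D k i) \<and>
             set (aord D k i) = blk (AP D) k (rho D k i) \<and>
             aord D k i ! 0 < aord D k i ! 1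
        else cord D k i = [] \<and> aord D k i = [])}"

definition Rtrip :: "nat \<Rightarrow> data \<Rightarrow> (nat \<times> nat \<times> nat) set" where
  "Rtrip n D = (\<Union>k\<in>{2..n}. \<Union>i\<in>{1..xs D k}.
     (let cl = Min (blk (CP D) k i) # cord D k i; al = aord D k i in
      {(cl ! j, al ! j, al ! ((j + 1) mod k)) | j. j < k}))"

definition Phi :: "nat \<Rightarrow> data \<Rightarrow> (nat \<Rightarrow> nat \<Rightarrow> nat)" where
  "Phi n D = (\<lambda>r c. if r \<in> {1..n} \<and> c \<in> {1..n} \<and>
        (\<exists>u v. (c, u, v) \<in> Rtrip n D \<and> (r = u \<or> r = v)) then 1 else 0)"

definition well_defined :: "nat \<Rightarrow> data \<Rightarrow> bool" where
  "well_defined n D \<longleftrightarrow>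
     (\<forall>c\<in>{1..n}. \<exists>!uv. (c, fst uv, snd uv) \<in> Rtrip n D) \<and>
     (\<forall>c\<in>{1..n}. \<forall>u v. (c, u, v) \<in> Rtrip n D \<longrightarrow> u \<noteq> v)"

end

theory Submission
  imports Defs
begin

lemma mod_pred_iff:
  fixes L j j' :: nat
  assumes "L \<ge> 1" "j < L" "j' < L"
  shows "((j' + 1) mod L = j) \<longleftrightarrow> (j' = (j + L - 1) mod L)"
proof (cases "j' + 1 < L")
  case True
  then show ?thesis using assms
    by (cases "j = 0") (auto simp: mod_if)
next
  case False
  then have "j' = L - 1" using assms by auto
  then show ?thesis using assms by (cases "j = 0") (auto simp: mod_if)
qed

lemma mod_succ_neq:
  fixes L j :: nat
  assumes "L \<ge> 2" "j < L"
  shows "(j + 1) mod L \<noteq> j" "(j + 1) mod L < L"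
        "(j + L - 1) mod L \<noteq> j" "(j + L - 1) mod L < L"
  using assms by (auto simp: mod_if)

definition famR :: "'i set \<Rightarrow> ('i \<Rightarrow> nat) \<Rightarrow> ('i \<Rightarrow> nat list) \<Rightarrow> ('i \<Rightarrow> nat list) \<Rightarrow> (nat \<times> nat \<times> nat) set" where
  "famR I L CL AL = (\<Union>p\<in>I. {(CL p ! j, AL p ! j, AL p ! ((j + 1) mod L p)) | j. j < L p})"

definition famM :: "nat \<Rightarrow> 'i set \<Rightarrow> ('i \<Rightarrow> nat) \<Rightarrow> ('i \<Rightarrow> nat list) \<Rightarrow> ('i \<Rightarrow> nat list) \<Rightarrow> nat \<Rightarrow> nat \<Rightarrow> nat" where
  "famM n I L CL AL = (\<lambda>r c. if r \<in> {1..n} \<and> c \<in> {1..n} \<and>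
        (\<exists>u v. (c, u, v) \<in> famR I L CL AL \<and> (r = u \<or> r = v)) then 1 else 0)"

definition cadj :: "nat \<Rightarrow> (nat \<Rightarrow> nat \<Rightarrow> nat) \<Rightarrow> (nat \<times> nat) set" where
  "cadj n M = {(c, c'). c \<in> {1..n} \<and> c' \<in> {1..n} \<and> (\<exists>r\<in>{1..n}. M r c = 1 \<and> M r c' = 1)}"

definition ccomp :: "nat \<Rightarrow> (nat \<Rightarrow> nat \<Rightarrow> nat) \<Rightarrow> nat \<Rightarrow> nat set" where
  "ccomp n M c = {c'. (c, c') \<in> (cadj n M)\<^sup>*}"

lemma sym_cadj: "sym (cadj n M)"
  by (auto simp: cadj_def sym_def)

locale fam =
  fixes n :: nat and I :: "'i set" and L :: "'i \<Rightarrow> nat" and CL AL :: "'i \<Rightarrow> nat list"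
  assumes L2: "p \<in> I \<Longrightarrow> L p \<ge> 2"
  and lenC: "p \<in> I \<Longrightarrow> length (CL p) = L p"
  and lenA: "p \<in> I \<Longrightarrow> length (AL p) = L p"
  and distC: "p \<in> I \<Longrightarrow> distinct (CL p)"
  and distA: "p \<in> I \<Longrightarrow> distinct (AL p)"
  and coverC: "(\<Union>p\<in>I. set (CL p)) = {1..n}"
  and coverA: "(\<Union>p\<in>I. set (AL p)) = {1..n}"
  and disjC: "p \<in> I \<Longrightarrow> q \<in> I \<Longrightarrow> x \<in> set (CL p) \<Longrightarrow> x \<in> set (CL q) \<Longrightarrow> p = q"
  and disjA: "p \<in> I \<Longrightarrow> q \<in> I \<Longrightarrow> x \<in> set (AL p) \<Longrightarrow> x \<in> set (AL q) \<Longrightarrow> p = q"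
begin

abbreviation "R \<equiv> famR I L CL AL"
abbreviation "M \<equiv> famM n I L CL AL"
lemmas R_def = famR_def[of I L CL AL]
lemmas M_def = famM_def[of n I L CL AL]

lemma R_iff: "(c, u, v) \<in> R \<longleftrightarrow>
   (\<exists>p\<in>I. \<exists>j<L p. c = CL p ! j \<and> u = AL p ! j \<and> v = AL p ! ((j + 1) mod L p))"
  unfolding R_def by blast

lemma M_iff: "M r c = 1 \<longleftrightarrow> (r \<in> {1..n} \<and> c \<in> {1..n} \<and> (\<exists>u v. (c, u, v) \<in> R \<and> (r = u \<or> r = v)))"
  unfolding M_def by simp

lemma CL_in: "p \<in> I \<Longrightarrow> j < L p \<Longrightarrow> CL p ! j \<in> {1..n}"
  using coverC lenC by (metis UN_I nth_mem)

lemma AL_in: "p \<in> I \<Longrightarrow> j < L p \<Longrightarrow> AL p ! j \<in> {1..n}"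
  using coverA lenA by (metis UN_I nth_mem)

lemma CL_idx: assumes "c \<in> {1..n}" obtains p j where "p \<in> I" "j < L p" "CL p ! j = c"
proof -
  have "c \<in> (\<Union>p\<in>I. set (CL p))" using coverC assms by simp
  then obtain p where "p \<in> I" "c \<in> set (CL p)" by blast
  then show ?thesis using that lenC by (metis in_set_conv_nth)
qed

lemma AL_idx: assumes "c \<in> {1..n}" obtains p j where "p \<in> I" "j < L p" "AL p ! j = c"
proof -
  have "c \<in> (\<Union>p\<in>I. set (AL p))" using coverA assms by simp
  then obtain p where "p \<in> I" "c \<in> set (AL p)" by blast
  then show ?thesis using that lenA by (metis in_set_conv_nth)
qed

lemma CL_uniq: "p \<in> I \<Longrightarrow> q \<in> I \<Longrightarrow> j < L p \<Longrightarrow> j' < L q \<Longrightarrow> CL p ! j = CL q ! j'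
   \<Longrightarrow> p = q \<and> j = j'"
  using disjC[of p q "CL p ! j"] lenC distC nth_eq_iff_index_eq by (metis nth_mem)

lemma AL_uniq: "p \<in> I \<Longrightarrow> q \<in> I \<Longrightarrow> j < L p \<Longrightarrow> j' < L q \<Longrightarrow> AL p ! j = AL q ! j'
   \<Longrightarrow> p = q \<and> j = j'"
  using disjA[of p q "AL p ! j"] lenA distA nth_eq_iff_index_eq by (metis nth_mem)

lemma rows_of: assumes "p \<in> I" "j < L p"
  shows "{r \<in> {1..n}. M r (CL p ! j) = 1} = {AL p ! j, AL p ! ((j + 1) mod L p)}"
proof -
  have L: "L p \<ge> 2" using L2 assms by auto
  have "(j + 1) mod L p < L p" using L by auto
  then have inn: "AL p ! j \<in> {1..n}" "AL p ! ((j + 1) mod L p) \<in> {1..n}"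
    using AL_in assms by auto
  have c: "CL p ! j \<in> {1..n}" using CL_in assms by auto
  show ?thesis
  proof (intro set_eqI iffI)
    fix r assume "r \<in> {r \<in> {1..n}. M r (CL p ! j) = 1}"
    then have "M r (CL p ! j) = 1" by simp
    then obtain u v where uv: "(CL p ! j, u, v) \<in> R" "r = u \<or> r = v"
      unfolding M_iff by blast
    then obtain q j' where "q \<in> I" "j' < L q" "CL p ! j = CL q ! j'" "u = AL q ! j'"
        "v = AL q ! ((j' + 1) mod L q)" by (auto simp: R_iff)
    moreover then have "q = p" "j' = j" using CL_uniq assms by metis+
    ultimately show "r \<in> {AL p ! j, AL p ! ((j + 1) mod L p)}" using uv by auto
  next
    fix r assume "r \<in> {AL p ! j, AL p ! ((j + 1) mod L p)}"
    moreover have "(CL p ! j, AL p ! j, AL p ! ((j + 1) mod L p)) \<in> R"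
      using assms unfolding R_iff by blast
    ultimately show "r \<in> {r \<in> {1..n}. M r (CL p ! j) = 1}"
      using inn c unfolding mem_Collect_eq M_iff by blast
  qed
qed

lemma cols_of: assumes "p \<in> I" "j < L p"
  shows "{c \<in> {1..n}. M (AL p ! j) c = 1} = {CL p ! j, CL p ! ((j + L p - 1) mod L p)}"
proof -
  have L: "L p \<ge> 2" using L2 assms by auto
  have jm: "(j + L p - 1) mod L p < L p" using L by auto
  have inn: "CL p ! j \<in> {1..n}" "CL p ! ((j + L p - 1) mod L p) \<in> {1..n}"
    using CL_in assms jm by auto
  have a: "AL p ! j \<in> {1..n}" using AL_in assms by auto
  show ?thesis
  proof (intro set_eqI iffI)
    fix c assume "c \<in> {c \<in> {1..n}. M (AL p ! j) c = 1}"
    then have "M (AL p ! j) c = 1" by simp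
    then obtain u v where uv: "(c, u, v) \<in> R" "AL p ! j = u \<or> AL p ! j = v"
      unfolding M_iff by blast
    then obtain q j' where q: "q \<in> I" "j' < L q" "c = CL q ! j'" "u = AL q ! j'"
        "v = AL q ! ((j' + 1) mod L q)" by (auto simp: R_iff)
    from uv(2) show "c \<in> {CL p ! j, CL p ! ((j + L p - 1) mod L p)}"
    proof
      assume "AL p ! j = u"
      then have "q = p" "j' = j" using AL_uniq assms q by metis+
      then show ?thesis using q by auto
    next
      assume "AL p ! j = v"
      moreover have "(j' + 1) mod L q < L q" using L2[OF q(1)] by auto
      ultimately have "q = p" "(j' + 1) mod L q = j" using AL_uniq assms q by metis+
      then have "j' = (j + L p - 1) mod L p" using mod_pred_iff[of "L p" j j'] L assms q by auto
      then show ?thesis using q \<open>q = p\<close> by auto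
    qed
  next
    fix c assume c: "c \<in> {CL p ! j, CL p ! ((j + L p - 1) mod L p)}"
    define j2 where "j2 = (j + L p - 1) mod L p"
    have j2: "j2 < L p" using jm by (simp add: j2_def)
    have j2s: "(j2 + 1) mod L p = j"
      using mod_pred_iff[of "L p" j j2] L assms(2) j2 by (simp add: j2_def)
    have "(CL p ! j, AL p ! j, AL p ! ((j + 1) mod L p)) \<in> R"
      using assms unfolding R_iff by blast
    moreover have "(CL p ! j2, AL p ! j2, AL p ! ((j2 + 1) mod L p)) \<in> R"
      using assms(1) j2 unfolding R_iff by blast
    ultimately show "c \<in> {c \<in> {1..n}. M (AL p ! j) c = 1}"
      using inn a c j2s unfolding mem_Collect_eq M_iff j2_def[symmetric] by auto
  qed
qed

lemma M01: "M r c \<in> {0, 1}" by (simp add: M_def)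

lemma M_out: "r \<notin> {1..n} \<or> c \<notin> {1..n} \<Longrightarrow> M r c = 0" by (auto simp: M_def)

lemma M_Lambda2: "M \<in> Lambda2 n"
proof -
  have "card {c \<in> {1..n}. M r c = 1} = 2" if r: "r \<in> {1..n}" for r
  proof -
    obtain p j where pj: "p \<in> I" "j < L p" "AL p ! j = r" using AL_idx[OF r] by blast
    have L: "L p \<ge> 2" using L2 pj by auto
    have "CL p ! j \<noteq> CL p ! ((j + L p - 1) mod L p)"
      using distC[OF pj(1)] lenC[OF pj(1)] nth_eq_iff_index_eq mod_succ_neq[OF L pj(2)] pj
      by metis
    then show ?thesis using cols_of[OF pj(1,2)] pj(3) by auto
  qed
  moreover have "card {r \<in> {1..n}. M r c = 1} = 2" if c: "c \<in> {1..n}" for c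
  proof -
    obtain p j where pj: "p \<in> I" "j < L p" "CL p ! j = c" using CL_idx[OF c] by blast
    have L: "L p \<ge> 2" using L2 pj by auto
    have "AL p ! j \<noteq> AL p ! ((j + 1) mod L p)"
      using distA[OF pj(1)] lenA[OF pj(1)] nth_eq_iff_index_eq mod_succ_neq[OF L pj(2)] pj
      by metis
    then show ?thesis using rows_of[OF pj(1,2)] pj(3) by auto
  qed
  ultimately show ?thesis unfolding Lambda2_def using M01 M_out by blast
qed

lemma wd:
  "(\<forall>c\<in>{1..n}. \<exists>!uv. (c, fst uv, snd uv) \<in> R) \<and>
   (\<forall>c\<in>{1..n}. \<forall>u v. (c, u, v) \<in> R \<longrightarrow> u \<noteq> v)"
proof (intro conjI ballI allI impI)
  fix c assume c: "c \<in> {1..n}"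
  obtain p j where pj: "p \<in> I" "j < L p" "CL p ! j = c" using CL_idx c by blast
  show "\<exists>!uv. (c, fst uv, snd uv) \<in> R"
  proof (rule ex1I[where a = "(AL p ! j, AL p ! ((j + 1) mod L p))"])
    show "(c, fst (AL p ! j, AL p ! ((j + 1) mod L p)), snd (AL p ! j, AL p ! ((j + 1) mod L p))) \<in> R"
      using pj by (auto simp: R_iff)
  next
    fix uv assume uvR: "(c, fst uv, snd uv) \<in> R"
    obtain q j' where q: "q \<in> I" "j' < L q" "c = CL q ! j'" "fst uv = AL q ! j'"
        "snd uv = AL q ! ((j' + 1) mod L q)" using uvR R_iff[of c "fst uv" "snd uv"] by blast
    then have "q = p" "j' = j" using CL_uniq pj by metis+
    then show "uv = (AL p ! j, AL p ! ((j + 1) mod L p))" using q by (cases uv) auto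
  qed
next
  fix c u v assume "(c, u, v) \<in> R"
  then obtain q j' where q: "q \<in> I" "j' < L q" "u = AL q ! j'"
        "v = AL q ! ((j' + 1) mod L q)" by (auto simp: R_iff)
  have L: "L q \<ge> 2" using L2 q by auto
  show "u \<noteq> v"
    using distA[OF q(1)] lenA[OF q(1)] nth_eq_iff_index_eq mod_succ_neq[OF L q(2)] q by metis
qed

lemma cadj_step:
  assumes p: "p \<in> I" and j: "j < L p" and y: "(CL p ! j, z) \<in> cadj n M"
  shows "z \<in> set (CL p)"
proof -
  from y obtain r where r: "r \<in> {1..n}" "M r (CL p ! j) = 1" "M r z = 1" "z \<in> {1..n}"
    by (auto simp: cadj_def)
  have L: "L p \<ge> 2" using L2 p by auto
  have "r \<in> {AL p ! j, AL p ! ((j + 1) mod L p)}" using rows_of[OF p j] r by blast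
  then obtain j' where j': "j' < L p" "r = AL p ! j'" using j mod_succ_neq(2)[OF L j] by blast
  have "z \<in> {CL p ! j', CL p ! ((j' + L p - 1) mod L p)}" using cols_of[OF p j'(1)] r j' by blast
  moreover have "(j' + L p - 1) mod L p < L p" using L by auto
  ultimately show ?thesis using j' lenC[OF p] by (auto intro: nth_mem)
qed

lemma comp_eq:
  assumes p: "p \<in> I" and c: "c \<in> set (CL p)"
  shows "ccomp n M c = set (CL p)"
proof
  show "ccomp n M c \<subseteq> set (CL p)"
  proof
    fix z assume "z \<in> ccomp n M c"
    then have "(c, z) \<in> (cadj n M)\<^sup>*" by (simp add: ccomp_def)
    then show "z \<in> set (CL p)"
    proof (induction rule: rtrancl_induct)
      case base then show ?case using c .
    next
      case (step y z)
      then obtain j where "j < L p" "y = CL p ! j" using lenC[OF p] by (metis in_set_conv_nth)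
      then show ?case using cadj_step[OF p] step by blast
    qed
  qed
next
  have L: "L p \<ge> 2" using L2 p by auto
  have chain: "(CL p ! 0, CL p ! j) \<in> (cadj n M)\<^sup>*" if "j < L p" for j
    using that
  proof (induction j)
    case 0 then show ?case by simp
  next
    case (Suc j)
    have "AL p ! (Suc j) \<in> {r \<in> {1..n}. M r (CL p ! j) = 1}"
      using rows_of[OF p, of j] Suc.prems by simp
    moreover have "AL p ! (Suc j) \<in> {r \<in> {1..n}. M r (CL p ! Suc j) = 1}"
      using rows_of[OF p, of "Suc j"] Suc.prems by simp
    moreover have "CL p ! j \<in> {1..n}" "CL p ! Suc j \<in> {1..n}" using CL_in p Suc.prems by auto
    ultimately have "(CL p ! j, CL p ! Suc j) \<in> cadj n M" by (auto simp: cadj_def)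
    then show ?case using Suc.IH Suc.prems by (meson Suc_lessD rtrancl_into_rtrancl)
  qed
  show "set (CL p) \<subseteq> ccomp n M c"
  proof
    fix z assume z: "z \<in> set (CL p)"
    obtain j where j: "j < L p" "z = CL p ! j" using z lenC[OF p] by (metis in_set_conv_nth)
    obtain j0 where j0: "j0 < L p" "c = CL p ! j0" using c lenC[OF p] by (metis in_set_conv_nth)
    have "(c, CL p ! 0) \<in> (cadj n M)\<^sup>*"
      using chain[OF j0(1)] j0(2) sym_cadj by (metis sym_conv_converse_eq rtrancl_converseI converse_iff)
    then show "z \<in> ccomp n M c" using chain[OF j(1)] j(2) by (simp add: ccomp_def)
  qed
qed

end


lemma fam_lists_eq:
  assumes F1: "fam n I L CL1 AL1" and F2: "fam n I L CL2 AL2"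
  and MM: "famM n I L CL1 AL1 = famM n I L CL2 AL2"
  and p: "p \<in> I" and h0: "CL1 p ! 0 = CL2 p ! 0"
  and lt1: "AL1 p ! 0 < AL1 p ! 1" and lt2: "AL2 p ! 0 < AL2 p ! 1"
  shows "CL1 p = CL2 p \<and> AL1 p = AL2 p"
proof -
  interpret A: fam n I L CL1 AL1 by (rule F1)
  interpret B: fam n I L CL2 AL2 by (rule F2)
  have L: "L p \<ge> 2" using A.L2 p by auto
  have main: "CL1 p ! j = CL2 p ! j \<and> AL1 p ! j = AL2 p ! j \<and>
      AL1 p ! ((j + 1) mod L p) = AL2 p ! ((j + 1) mod L p)" if "j < L p" for j
    using that
  proof (induction j)
    case 0
    have "{AL1 p ! 0, AL1 p ! 1} = {AL2 p ! 0, AL2 p ! 1}"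
      using A.rows_of[OF p, of 0] B.rows_of[OF p, of 0] MM h0 L by simp
    then have "AL1 p ! 0 = AL2 p ! 0 \<and> AL1 p ! 1 = AL2 p ! 1"
      using lt1 lt2 by (auto simp: doubleton_eq_iff)
    then show ?case using h0 L by simp
  next
    case (Suc j)
    have j: "j < L p" using Suc.prems by simp
    note IH = Suc.IH[OF j]
    have m1: "(j + 1) mod L p = Suc j" using Suc.prems by simp
    have m2: "(Suc j + L p - 1) mod L p = j" using Suc.prems by simp
    have a: "AL1 p ! Suc j = AL2 p ! Suc j" using IH m1 by simp
    have "{CL1 p ! Suc j, CL1 p ! j} = {CL2 p ! Suc j, CL2 p ! j}"
      using A.cols_of[OF p Suc.prems] B.cols_of[OF p Suc.prems] MM a m2 by simp
    moreover have "CL1 p ! Suc j \<noteq> CL1 p ! j"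
      using A.distC[OF p] A.lenC[OF p] Suc.prems nth_eq_iff_index_eq by (metis j n_not_Suc_n)
    moreover have "CL2 p ! Suc j \<noteq> CL2 p ! j"
      using B.distC[OF p] B.lenC[OF p] Suc.prems nth_eq_iff_index_eq by (metis j n_not_Suc_n)
    ultimately have c: "CL1 p ! Suc j = CL2 p ! Suc j" using IH by (auto simp: doubleton_eq_iff)
    have "{AL1 p ! Suc j, AL1 p ! ((Suc j + 1) mod L p)} = {AL2 p ! Suc j, AL2 p ! ((Suc j + 1) mod L p)}"
      using A.rows_of[OF p Suc.prems] B.rows_of[OF p Suc.prems] MM c by simp
    moreover have "AL1 p ! Suc j \<noteq> AL1 p ! ((Suc j + 1) mod L p)"
      using A.distA[OF p] A.lenA[OF p] Suc.prems nth_eq_iff_index_eq mod_succ_neq[OF L Suc.prems]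
      by metis
    moreover have "AL2 p ! Suc j \<noteq> AL2 p ! ((Suc j + 1) mod L p)"
      using B.distA[OF p] B.lenA[OF p] Suc.prems nth_eq_iff_index_eq mod_succ_neq[OF L Suc.prems]
      by metis
    ultimately have "AL1 p ! ((Suc j + 1) mod L p) = AL2 p ! ((Suc j + 1) mod L p)"
      using a by (auto simp: doubleton_eq_iff)
    then show ?case using a c by simp
  qed
  show ?thesis
    using main A.lenC[OF p] B.lenC[OF p] A.lenA[OF p] B.lenA[OF p]
    by (auto intro!: nth_equalityI)
qed

section \<open>Blocks\<close>

context linorder begin
lemma skl_props:
  assumes "inj_on f S" "finite S"
  shows "set (sorted_key_list_of_set f S) = S \<and> distinct (sorted_key_list_of_set f S) \<and>
         length (sorted_key_list_of_set f S) = card S"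
proof -
  interpret folding_insort_key "(\<le>)" "(<)" S f by unfold_locales (rule assms(1))
  show ?thesis using assms(2) distinct_if_distinct_map by auto
qed
end

lemma part_facts:
  fixes n :: nat
  assumes "partition_on {1..n} P"
  shows "finite P" "B \<in> P \<Longrightarrow> finite B" "B \<in> P \<Longrightarrow> B \<noteq> {}" "B \<in> P \<Longrightarrow> B \<subseteq> {1..n}"
proof -
  have "P \<subseteq> Pow {1..n}" using assms by (auto simp: partition_on_def)
  then show "finite P" by (rule finite_subset) simp
  show "B \<in> P \<Longrightarrow> B \<subseteq> {1..n}" using assms by (auto simp: partition_on_def)
  then show "B \<in> P \<Longrightarrow> finite B" using finite_subset by blast
  show "B \<in> P \<Longrightarrow> B \<noteq> {}" using assms by (auto simp: partition_on_def)
qed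

lemma part_disj:
  assumes "partition_on A P" "B \<in> P" "B' \<in> P" "x \<in> B" "x \<in> B'"
  shows "B = B'"
  using assms unfolding partition_on_def disjoint_def by blast

lemma part_sum: fixes n :: nat assumes "partition_on {1..n} P" shows "(\<Sum>B\<in>P. card B) = n"
proof -
  have fins: "\<And>B. B \<in> P \<Longrightarrow> finite B" using part_facts(2)[OF assms] by blast
  have "card (\<Union>P) = (\<Sum>B\<in>P. card B)"
    by (rule card_Union_disjoint[OF partition_onD2[OF assms] fins])
  moreover have "\<Union>P = {1..n}" using assms by (simp add: partition_on_def)
  ultimately show ?thesis by simp
qed

lemma sum_group2:
  fixes n :: nat
  assumes "partition_on {1..n} P"
  shows "(\<Sum>k=2..n. k * card {B\<in>P. card B = k}) = (\<Sum>B\<in>{B\<in>P. card B \<in> {2..n}}. card B)"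
proof -
  have fin: "finite P" using part_facts(1)[OF assms] .
  have eq: "{B\<in>P. card B \<in> {2..n}} = (\<Union>k\<in>{2..n}. {B\<in>P. card B = k})" by auto
  have "(\<Sum>B\<in>{B\<in>P. card B \<in> {2..n}}. card B) = (\<Sum>k=2..n. \<Sum>B\<in>{B\<in>P. card B = k}. card B)"
    unfolding eq by (rule sum.UNION_disjoint) (use fin in auto)
  also have "\<dots> = (\<Sum>k=2..n. k * card {B\<in>P. card B = k})"
    by (rule sum.cong) auto
  finally show ?thesis by simp
qed

lemma cards_range:
  fixes n :: nat
  assumes P: "partition_on {1..n} P" and s: "(\<Sum>k=2..n. k * card {B\<in>P. card B = k}) = n"
  and B: "B \<in> P"
  shows "card B \<in> {2..n}"
proof (rule ccontr)
  assume nB: "card B \<notin> {2..n}"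
  have fin: "finite P" using part_facts(1)[OF P] .
  have "(\<Sum>B\<in>P. card B) = (\<Sum>B\<in>{B\<in>P. card B \<in> {2..n}}. card B) + (\<Sum>B\<in>P - {B\<in>P. card B \<in> {2..n}}. card B)"
    using fin by (metis (no_types, lifting) add.commute mem_Collect_eq subsetI sum.subset_diff)
  then have "(\<Sum>B\<in>P - {B\<in>P. card B \<in> {2..n}}. card B) = 0"
    using part_sum[OF P] sum_group2[OF P] s by simp
  moreover have f2: "finite (P - {B\<in>P. card B \<in> {2..n}})" using fin by simp
  ultimately have all0: "\<forall>a\<in>P - {B\<in>P. card B \<in> {2..n}}. card a = 0"
    using sum_eq_0_iff[OF f2, of card] by blast
  have "B \<in> P - {B\<in>P. card B \<in> {2..n}}" using B nB by blast
  then have "card B = 0" using all0 by blast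
  then show False using part_facts(2,3)[OF P B] by simp
qed

lemma cards_sum:
  fixes n :: nat
  assumes P: "partition_on {1..n} P" and c: "\<And>B. B \<in> P \<Longrightarrow> card B \<ge> 2"
  shows "(\<Sum>k=2..n. k * card {B\<in>P. card B = k}) = n"
proof -
  have "card B \<le> n" if "B \<in> P" for B
    using card_mono[OF _ part_facts(4)[OF P that]] by simp
  then have "{B\<in>P. card B \<in> {2..n}} = P" using c by fastforce
  then show ?thesis using sum_group2[OF P] part_sum[OF P] by simp
qed

lemma blk_bij:
  assumes P: "partition_on {1..n} P"
  shows "bij_betw (blk P k) {1..card {B\<in>P. card B = k}} {B\<in>P. card B = k}"
proof -
  define S where "S = {B\<in>P. card B = k}"
  have fin: "finite S" using part_facts(1)[OF P] by (simp add: S_def)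
  have inj: "inj_on Min S"
  proof (rule inj_onI)
    fix B B' assume "B \<in> S" "B' \<in> S" "Min B = Min B'"
    moreover have "Min B \<in> B" "Min B' \<in> B'" using part_facts(2,3)[OF P] \<open>B \<in> S\<close> \<open>B' \<in> S\<close>
      by (auto simp: S_def)
    ultimately show "B = B'" using part_disj[OF P] by (auto simp: S_def)
  qed
  define l where "l = sorted_key_list_of_set Min S"
  have sl: "set l = S" and dl: "distinct l" and ll: "length l = card S"
    using skl_props[OF inj fin] by (simp_all add: l_def)
  have b1: "bij_betw (\<lambda>i. i - 1) {1..card S} {..<card S}"
    by (rule bij_betw_byWitness[where f' = Suc]) auto
  have b2: "bij_betw ((!) l) {..<card S} S" by (rule bij_betw_nth) (use dl sl ll in auto)
  have "bij_betw ((!) l \<circ> (\<lambda>i. i - 1)) {1..card S} S" by (rule bij_betw_trans[OF b1 b2])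
  moreover have "blk P k = (!) l \<circ> (\<lambda>i. i - 1)"
    by (auto simp: blk_def l_def S_def)
  ultimately show ?thesis by (simp add: S_def)
qed

section \<open>From data to families\<close>

definition Idx :: "nat \<Rightarrow> data \<Rightarrow> (nat \<times> nat) set" where
  "Idx n D = {(k, i). k \<in> {2..n} \<and> i \<in> {1..xs D k}}"

definition CLD :: "data \<Rightarrow> nat \<times> nat \<Rightarrow> nat list" where
  "CLD D = (\<lambda>(k, i). Min (blk (CP D) k i) # cord D k i)"

definition ALD :: "data \<Rightarrow> nat \<times> nat \<Rightarrow> nat list" where
  "ALD D = (\<lambda>(k, i). aord D k i)"

lemma UN_pairs: "(\<Union>k\<in>A. \<Union>i\<in>B k. F k i) = (\<Union>p\<in>{(k,i). k \<in> A \<and> i \<in> B k}. F (fst p) (snd p))"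
  by (rule set_eqI) (simp, blast)

lemma Rtrip_eq: "Rtrip n D = famR (Idx n D) fst (CLD D) (ALD D)"
  unfolding Rtrip_def famR_def Let_def UN_pairs Idx_def
  by (rule SUP_cong) (clarsimp simp: CLD_def ALD_def)+

lemma Phi_eq: "Phi n D = famM n (Idx n D) fst (CLD D) (ALD D)"
  unfolding Phi_def famM_def Rtrip_eq ..


locale dn =
  fixes n :: nat and D :: data
  assumes D: "D \<in> Dn n"
begin

lemma xs0: "k \<notin> {2..n} \<Longrightarrow> xs D k = 0" using D by (simp add: Dn_def)
lemma sumx: "(\<Sum>k=2..n. k * xs D k) = n" using D by (simp add: Dn_def)
lemma cpP: "partition_on {1..n} (CP D)" using D by (simp add: Dn_def)
lemma apP: "partition_on {1..n} (AP D)" using D by (simp add: Dn_def)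
lemma cardC: "k \<in> {2..n} \<Longrightarrow> card {B\<in>CP D. card B = k} = xs D k" using D by (simp add: Dn_def)
lemma cardA: "k \<in> {2..n} \<Longrightarrow> card {B\<in>AP D. card B = k} = xs D k" using D by (simp add: Dn_def)
lemma rhop: "rho D k permutes {1..xs D k}" using D by (simp add: Dn_def)

lemma lists:
  assumes "k \<in> {2..n}" "i \<in> {1..xs D k}"
  shows "distinct (cord D k i) \<and>
             set (cord D k i) = blk (CP D) k i - {Min (blk (CP D) k i)} \<and>
             distinct (aord D k i) \<and>
             set (aord D k i) = blk (AP D) k (rho D k i) \<and>
             aord D k i ! 0 < aord D k i ! 1"
proof -
  have all: "\<forall>k i. if k \<in> {2..n} \<and> i \<in> {1..xs D k}
        then distinct (cord D k i) \<and>
             set (cord D k i) = blk (CP D) k i - {Min (blk (CP D) k i)} \<and>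
             distinct (aord D k i) \<and>
             set (aord D k i) = blk (AP D) k (rho D k i) \<and>
             aord D k i ! 0 < aord D k i ! 1
        else cord D k i = [] \<and> aord D k i = []" using D unfolding Dn_def by blast
  have a: "k \<in> {2..n} \<and> i \<in> {1..xs D k}" using assms by blast
  from all have h: "if k \<in> {2..n} \<and> i \<in> {1..xs D k}
        then distinct (cord D k i) \<and>
             set (cord D k i) = blk (CP D) k i - {Min (blk (CP D) k i)} \<and>
             distinct (aord D k i) \<and>
             set (aord D k i) = blk (AP D) k (rho D k i) \<and>
             aord D k i ! 0 < aord D k i ! 1
        else cord D k i = [] \<and> aord D k i = []" by blast
  show ?thesis using h[unfolded if_P[OF a]] .
qed

lemma lists_out:
  assumes "\<not> (k \<in> {2..n} \<and> i \<in> {1..xs D k})"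
  shows "cord D k i = [] \<and> aord D k i = []"
proof -
  have all: "\<forall>k i. if k \<in> {2..n} \<and> i \<in> {1..xs D k}
        then distinct (cord D k i) \<and>
             set (cord D k i) = blk (CP D) k i - {Min (blk (CP D) k i)} \<and>
             distinct (aord D k i) \<and>
             set (aord D k i) = blk (AP D) k (rho D k i) \<and>
             aord D k i ! 0 < aord D k i ! 1
        else cord D k i = [] \<and> aord D k i = []" using D unfolding Dn_def by blast
  from all have h: "if k \<in> {2..n} \<and> i \<in> {1..xs D k}
        then distinct (cord D k i) \<and>
             set (cord D k i) = blk (CP D) k i - {Min (blk (CP D) k i)} \<and>
             distinct (aord D k i) \<and>
             set (aord D k i) = blk (AP D) k (rho D k i) \<and>
             aord D k i ! 0 < aord D k i ! 1
        else cord D k i = [] \<and> aord D k i = []" by blast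
  show ?thesis using h[unfolded if_not_P[OF assms]] .
qed

lemma cp_range: "B \<in> CP D \<Longrightarrow> card B \<in> {2..n}"
proof -
  assume B: "B \<in> CP D"
  have "(\<Sum>k=2..n. k * card {B\<in>CP D. card B = k}) = (\<Sum>k=2..n. k * xs D k)"
    by (rule sum.cong) (simp_all add: cardC)
  then show ?thesis using cards_range[OF cpP _ B] sumx by simp
qed

lemma ap_range: "B \<in> AP D \<Longrightarrow> card B \<in> {2..n}"
proof -
  assume B: "B \<in> AP D"
  have "(\<Sum>k=2..n. k * card {B\<in>AP D. card B = k}) = (\<Sum>k=2..n. k * xs D k)"
    by (rule sum.cong) (simp_all add: cardA)
  then show ?thesis using cards_range[OF apP _ B] sumx by simp
qed

lemma bijC: "k \<in> {2..n} \<Longrightarrow> bij_betw (blk (CP D) k) {1..xs D k} {B\<in>CP D. card B = k}"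
  using blk_bij[OF cpP, of k] cardC by simp

lemma bijA: "k \<in> {2..n} \<Longrightarrow> bij_betw (blk (AP D) k) {1..xs D k} {B\<in>AP D. card B = k}"
  using blk_bij[OF apP, of k] cardA by simp

lemma rho_in: "i \<in> {1..xs D k} \<Longrightarrow> rho D k i \<in> {1..xs D k}"
  using permutes_in_image[OF rhop] by blast

lemma blkC: "k \<in> {2..n} \<Longrightarrow> i \<in> {1..xs D k} \<Longrightarrow> blk (CP D) k i \<in> CP D \<and> card (blk (CP D) k i) = k"
  using bij_betw_apply[OF bijC] by blast

lemma blkA: "k \<in> {2..n} \<Longrightarrow> i \<in> {1..xs D k} \<Longrightarrow> blk (AP D) k (rho D k i) \<in> AP D \<and> card (blk (AP D) k (rho D k i)) = k"
  using bij_betw_apply[OF bijA] rho_in by blast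

lemma CL_props:
  assumes k: "k \<in> {2..n}" and i: "i \<in> {1..xs D k}"
  shows "set (CLD D (k, i)) = blk (CP D) k i \<and> distinct (CLD D (k, i)) \<and> length (CLD D (k, i)) = k"
proof -
  define B where "B = blk (CP D) k i"
  have B: "B \<in> CP D" "card B = k" using blkC[OF k i] by (auto simp: B_def)
  have "finite B" "B \<noteq> {}" using part_facts(2,3)[OF cpP B(1)] by auto
  then have m: "Min B \<in> B" by simp
  have l: "distinct (cord D k i)" "set (cord D k i) = B - {Min B}" using lists[OF k i] by (auto simp: B_def)
  have s: "set (CLD D (k, i)) = B" using m l by (auto simp: CLD_def B_def)
  have d: "distinct (CLD D (k, i))" using l by (simp add: CLD_def B_def)
  have "length (CLD D (k, i)) = card B" using s d distinct_card by metis
  then show ?thesis using s d B by (simp add: B_def)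
qed

lemma AL_props:
  assumes k: "k \<in> {2..n}" and i: "i \<in> {1..xs D k}"
  shows "set (ALD D (k, i)) = blk (AP D) k (rho D k i) \<and> distinct (ALD D (k, i)) \<and>
     length (ALD D (k, i)) = k \<and> ALD D (k, i) ! 0 < ALD D (k, i) ! 1"
proof -
  have l: "distinct (aord D k i)" "set (aord D k i) = blk (AP D) k (rho D k i)"
     "aord D k i ! 0 < aord D k i ! 1" using lists[OF k i] by auto
  have "length (aord D k i) = k" using l blkA[OF k i] distinct_card by metis
  then show ?thesis using l by (simp add: ALD_def)
qed

lemma Idx_E: assumes "p \<in> Idx n D"
  obtains k i where "p = (k, i)" "k \<in> {2..n}" "i \<in> {1..xs D k}"
  using assms by (auto simp: Idx_def)

lemma CP_eq: "CP D = (\<lambda>p. set (CLD D p)) ` Idx n D"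
proof
  show "(\<lambda>p. set (CLD D p)) ` Idx n D \<subseteq> CP D"
    using CL_props blkC by (auto elim!: Idx_E)
  show "CP D \<subseteq> (\<lambda>p. set (CLD D p)) ` Idx n D"
  proof
    fix B assume B: "B \<in> CP D"
    define k where "k = card B"
    have k: "k \<in> {2..n}" using cp_range B by (simp add: k_def)
    have "B \<in> blk (CP D) k ` {1..xs D k}" using bij_betw_imp_surj_on[OF bijC[OF k]] B k_def by auto
    then obtain i where i: "i \<in> {1..xs D k}" "B = blk (CP D) k i" by auto
    then have "B = set (CLD D (k, i))" using CL_props[OF k i(1)] by simp
    moreover have "(k, i) \<in> Idx n D" using k i by (simp add: Idx_def)
    ultimately show "B \<in> (\<lambda>p. set (CLD D p)) ` Idx n D" by blast
  qed
qed

lemma AP_eq: "AP D = (\<lambda>p. set (ALD D p)) ` Idx n D"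
proof
  show "(\<lambda>p. set (ALD D p)) ` Idx n D \<subseteq> AP D"
    using AL_props blkA by (auto elim!: Idx_E)
  show "AP D \<subseteq> (\<lambda>p. set (ALD D p)) ` Idx n D"
  proof
    fix B assume B: "B \<in> AP D"
    define k where "k = card B"
    have k: "k \<in> {2..n}" using ap_range B by (simp add: k_def)
    have "B \<in> blk (AP D) k ` {1..xs D k}" using bij_betw_imp_surj_on[OF bijA[OF k]] B k_def by auto
    then obtain i' where i': "i' \<in> {1..xs D k}" "B = blk (AP D) k i'" by auto
    have "i' \<in> rho D k ` {1..xs D k}" using permutes_image[OF rhop] i' by simp
    then obtain i where i: "i \<in> {1..xs D k}" "i' = rho D k i" by auto
    then have "B = set (ALD D (k, i))" using AL_props[OF k i(1)] i' by simp
    moreover have "(k, i) \<in> Idx n D" using k i by (simp add: Idx_def)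
    ultimately show "B \<in> (\<lambda>p. set (ALD D p)) ` Idx n D" by blast
  qed
qed

lemma is_fam: "fam n (Idx n D) fst (CLD D) (ALD D)"
proof -
  have L2': "\<And>p. p \<in> Idx n D \<Longrightarrow> 2 \<le> fst p" by (auto elim!: Idx_E)
  have lenC': "\<And>p. p \<in> Idx n D \<Longrightarrow> length (CLD D p) = fst p" using CL_props by (auto elim!: Idx_E)
  have lenA': "\<And>p. p \<in> Idx n D \<Longrightarrow> length (ALD D p) = fst p" using AL_props by (auto elim!: Idx_E)
  have distC': "\<And>p. p \<in> Idx n D \<Longrightarrow> distinct (CLD D p)" using CL_props by (auto elim!: Idx_E)
  have distA': "\<And>p. p \<in> Idx n D \<Longrightarrow> distinct (ALD D p)" using AL_props by (auto elim!: Idx_E)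
  have coverC': "(\<Union>p\<in>Idx n D. set (CLD D p)) = {1..n}"
    using CP_eq cpP by (simp add: partition_on_def)
  have coverA': "(\<Union>p\<in>Idx n D. set (ALD D p)) = {1..n}"
    using AP_eq apP by (simp add: partition_on_def)
  have disjC': "p = q" if a: "p \<in> Idx n D" "q \<in> Idx n D" "x \<in> set (CLD D p)" "x \<in> set (CLD D q)" for p q x
  proof -
    obtain k i where p: "p = (k, i)" "k \<in> {2..n}" "i \<in> {1..xs D k}" using a(1) by (rule Idx_E)
    obtain k' i' where q: "q = (k', i')" "k' \<in> {2..n}" "i' \<in> {1..xs D k'}" using a(2) by (rule Idx_E)
    have x1: "x \<in> blk (CP D) k i"
      using a(3)[unfolded p(1), unfolded conjunct1[OF CL_props[OF p(2,3)]]] .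
    have x2: "x \<in> blk (CP D) k' i'"
      using a(4)[unfolded q(1), unfolded conjunct1[OF CL_props[OF q(2,3)]]] .
    have e: "blk (CP D) k i = blk (CP D) k' i'"
      using part_disj[OF cpP conjunct1[OF blkC[OF p(2,3)]] conjunct1[OF blkC[OF q(2,3)]] x1 x2] .
    have c1: "card (blk (CP D) k i) = k" using blkC[OF p(2,3)] by blast
    have c2: "card (blk (CP D) k' i') = k'" using blkC[OF q(2,3)] by blast
    have kk: "k = k'" using c1 c2 e by simp
    have e2: "blk (CP D) k i = blk (CP D) k i'" using e kk by simp
    have q3: "i' \<in> {1..xs D k}" using q(3) kk by simp
    have "i = i'"
      using inj_onD[OF bij_betw_imp_inj_on[OF bijC[OF p(2)]] e2 p(3) q3] .
    then show ?thesis using p(1) q(1) kk by simp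
  qed
  have disjA': "p = q" if a: "p \<in> Idx n D" "q \<in> Idx n D" "x \<in> set (ALD D p)" "x \<in> set (ALD D q)" for p q x
  proof -
    obtain k i where p: "p = (k, i)" "k \<in> {2..n}" "i \<in> {1..xs D k}" using a(1) by (rule Idx_E)
    obtain k' i' where q: "q = (k', i')" "k' \<in> {2..n}" "i' \<in> {1..xs D k'}" using a(2) by (rule Idx_E)
    have x1: "x \<in> blk (AP D) k (rho D k i)"
      using a(3)[unfolded p(1), unfolded conjunct1[OF AL_props[OF p(2,3)]]] .
    have x2: "x \<in> blk (AP D) k' (rho D k' i')"
      using a(4)[unfolded q(1), unfolded conjunct1[OF AL_props[OF q(2,3)]]] .
    have e: "blk (AP D) k (rho D k i) = blk (AP D) k' (rho D k' i')"
      using part_disj[OF apP conjunct1[OF blkA[OF p(2,3)]] conjunct1[OF blkA[OF q(2,3)]] x1 x2] .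
    have c1: "card (blk (AP D) k (rho D k i)) = k" using blkA[OF p(2,3)] by blast
    have c2: "card (blk (AP D) k' (rho D k' i')) = k'" using blkA[OF q(2,3)] by blast
    have kk: "k = k'" using c1 c2 e by simp
    have r1: "rho D k i \<in> {1..xs D k}" using rho_in[OF p(3)] .
    have q3: "i' \<in> {1..xs D k}" using q(3) kk by simp
    have r2: "rho D k i' \<in> {1..xs D k}" using rho_in[OF q3] .
    have e2: "blk (AP D) k (rho D k i) = blk (AP D) k (rho D k i')" using e kk by simp
    have "rho D k i = rho D k i'"
      using inj_onD[OF bij_betw_imp_inj_on[OF bijA[OF p(2)]] e2 r1 r2] .
    then have "i = i'" using injD[OF permutes_inj[OF rhop]] by blast
    then show ?thesis using p q kk by simp
  qed
  show ?thesis
    unfolding fam_def using L2' lenC' lenA' distC' distA' coverC' coverA' disjC' disjA' by blast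
qed

lemma CL0: "(k, i) \<in> Idx n D \<Longrightarrow> CLD D (k, i) ! 0 = Min (blk (CP D) k i)"
  by (simp add: CLD_def)

lemma AL01: "p \<in> Idx n D \<Longrightarrow> ALD D p ! 0 < ALD D p ! 1"
  using AL_props by (auto elim!: Idx_E)

lemma CP_comp: "CP D = ccomp n (Phi n D) ` {1..n}"
proof -
  interpret F: fam n "Idx n D" fst "CLD D" "ALD D" by (rule is_fam)
  have PM: "Phi n D = famM n (Idx n D) fst (CLD D) (ALD D)" by (rule Phi_eq)
  show ?thesis
  proof
    show "CP D \<subseteq> ccomp n (Phi n D) ` {1..n}"
    proof
      fix B assume "B \<in> CP D"
      then obtain p where p: "p \<in> Idx n D" "B = set (CLD D p)" using CP_eq by auto
      have "0 < fst p" using F.L2[OF p(1)] by simp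
      then have c: "CLD D p ! 0 \<in> set (CLD D p)" using F.lenC[OF p(1)] by simp
      have "CLD D p ! 0 \<in> {1..n}" using F.CL_in[OF p(1)] \<open>0 < fst p\<close> by simp
      moreover have "ccomp n (Phi n D) (CLD D p ! 0) = B" using F.comp_eq[OF p(1) c] PM p by simp
      ultimately show "B \<in> ccomp n (Phi n D) ` {1..n}" by force
    qed
  next
    show "ccomp n (Phi n D) ` {1..n} \<subseteq> CP D"
    proof
      fix B assume "B \<in> ccomp n (Phi n D) ` {1..n}"
      then obtain c where c: "c \<in> {1..n}" "B = ccomp n (Phi n D) c" by auto
      have "c \<in> (\<Union>p\<in>Idx n D. set (CLD D p))" using F.coverC c(1) by simp
      then obtain p where p: "p \<in> Idx n D" "c \<in> set (CLD D p)" by blast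
      have "B = set (CLD D p)" using F.comp_eq[OF p] PM c by simp
      then show "B \<in> CP D" using CP_eq p by auto
    qed
  qed
qed

end

lemma inj_Phi: "inj_on (Phi n) (Dn n)"
proof (rule inj_onI)
  fix D D' assume D: "D \<in> Dn n" and D': "D' \<in> Dn n" and PP: "Phi n D = Phi n D'"
  interpret X: dn n D by (rule dn.intro[OF D])
  interpret Y: dn n D' by (rule dn.intro[OF D'])
  have cp: "CP D = CP D'" using X.CP_comp Y.CP_comp PP by simp
  have xs: "xs D = xs D'"
  proof
    fix k show "xs D k = xs D' k"
      using X.cardC Y.cardC X.xs0 Y.xs0 cp by (cases "k \<in> {2..n}") auto
  qed
  have idx: "Idx n D' = Idx n D" by (simp add: Idx_def xs)
  have FX: "fam n (Idx n D) fst (CLD D) (ALD D)" by (rule X.is_fam)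
  have FY: "fam n (Idx n D) fst (CLD D') (ALD D')" using Y.is_fam idx by simp
  have MM: "famM n (Idx n D) fst (CLD D) (ALD D) = famM n (Idx n D) fst (CLD D') (ALD D')"
    using Phi_eq[of n D] Phi_eq[of n D'] PP idx by simp
  have lists: "CLD D p = CLD D' p \<and> ALD D p = ALD D' p" if p: "p \<in> Idx n D" for p
  proof (rule fam_lists_eq[OF FX FY MM p])
    obtain k i where "p = (k, i)" using prod.exhaust by blast
    then show "CLD D p ! 0 = CLD D' p ! 0" using p idx cp by (simp add: CLD_def)
    show "ALD D p ! 0 < ALD D p ! 1" using X.AL01 p .
    show "ALD D' p ! 0 < ALD D' p ! 1" using Y.AL01 p idx by simp
  qed
  have cord: "cord D = cord D'"
  proof (intro ext)
    fix k i show "cord D k i = cord D' k i"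
    proof (cases "(k, i) \<in> Idx n D")
      case True
      then show ?thesis using lists[OF True] by (simp add: CLD_def)
    next
      case False
      then show ?thesis using X.lists_out Y.lists_out xs by (simp add: Idx_def)
    qed
  qed
  have aord: "aord D = aord D'"
  proof (intro ext)
    fix k i show "aord D k i = aord D' k i"
    proof (cases "(k, i) \<in> Idx n D")
      case True
      then show ?thesis using lists[OF True] by (simp add: ALD_def)
    next
      case False
      then show ?thesis using X.lists_out Y.lists_out xs by (simp add: Idx_def)
    qed
  qed
  have ap: "AP D = AP D'"
    using X.AP_eq Y.AP_eq idx lists by (auto simp: image_def)
  have rho: "rho D = rho D'"
  proof (intro ext)
    fix k i show "rho D k i = rho D' k i"
    proof (cases "i \<in> {1..xs D k}")
      case False
      have F2: "i \<notin> {1..xs D' k}" using False xs by simp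
      show ?thesis using permutes_not_in[OF X.rhop False] permutes_not_in[OF Y.rhop F2] by simp
    next
      case True
      then have k: "k \<in> {2..n}" using X.xs0 by fastforce
      have "blk (AP D) k (rho D k i) = blk (AP D) k (rho D' k i)"
        using X.AL_props[OF k True] Y.AL_props[of k i] k True xs lists[of "(k, i)"] ap
        by (simp add: Idx_def)
      moreover have r1: "rho D k i \<in> {1..xs D k}" using X.rho_in[OF True] .
      moreover have r2: "rho D' k i \<in> {1..xs D k}" using Y.rho_in[of i k] True xs by simp
      ultimately show ?thesis
        using inj_onD[OF bij_betw_imp_inj_on[OF X.bijA[OF k]]] by blast
    qed
  qed
  show "D = D'" using cp xs cord aord ap rho by (intro data.equality) auto
qed

lemma other2:
  assumes "card S = 2" "x \<in> S"
  shows "(THE y. y \<in> S \<and> y \<noteq> x) \<in> S" "(THE y. y \<in> S \<and> y \<noteq> x) \<noteq> x"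
    "S = {x, THE y. y \<in> S \<and> y \<noteq> x}"
    "\<And>y. y \<in> S \<Longrightarrow> y \<noteq> x \<Longrightarrow> (THE y. y \<in> S \<and> y \<noteq> x) = y"
proof -
  obtain a b where ab: "S = {a, b}" "a \<noteq> b" using assms(1) card_2_iff by metis
  have ex: "\<exists>!y. y \<in> S \<and> y \<noteq> x" using ab assms(2) by auto
  then have t: "(THE y. y \<in> S \<and> y \<noteq> x) \<in> S \<and> (THE y. y \<in> S \<and> y \<noteq> x) \<noteq> x" by (rule theI')
  then show "(THE y. y \<in> S \<and> y \<noteq> x) \<in> S" "(THE y. y \<in> S \<and> y \<noteq> x) \<noteq> x" by auto
  show "S = {x, THE y. y \<in> S \<and> y \<noteq> x}" using t ab assms(2) by auto
  show "\<And>y. y \<in> S \<Longrightarrow> y \<noteq> x \<Longrightarrow> (THE y. y \<in> S \<and> y \<noteq> x) = y"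
    using ex t by blast
qed

lemma pair_other: "{x, z} = {z, y} \<Longrightarrow> x \<noteq> z \<Longrightarrow> y \<noteq> z \<Longrightarrow> x = y"
  by (auto simp: doubleton_eq_iff)

locale lam =
  fixes n :: nat and M :: "nat \<Rightarrow> nat \<Rightarrow> nat"
  assumes M: "M \<in> Lambda2 n"
begin

definition rows where "rows c = {r \<in> {1..n}. M r c = 1}"
definition cols where "cols r = {c \<in> {1..n}. M r c = 1}"
definition orow where "orow c r = (THE r'. r' \<in> rows c \<and> r' \<noteq> r)"
definition ocol where "ocol r c = (THE c'. c' \<in> cols r \<and> c' \<noteq> c)"
definition step where "step x = (ocol (orow (fst x) (snd x)) (fst x), orow (fst x) (snd x))"
definition FF where "FF = {(c, r). c \<in> {1..n} \<and> r \<in> {1..n} \<and> M r c = 1}"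

lemma M01: "M r c \<in> {0, 1}" using M by (simp add: Lambda2_def)
lemma M_out: "M r c = 1 \<Longrightarrow> r \<in> {1..n} \<and> c \<in> {1..n}"
proof -
  assume a: "M r c = 1"
  have h: "\<forall>r c. (r \<notin> {1..n} \<or> c \<notin> {1..n}) \<longrightarrow> M r c = 0" using M unfolding Lambda2_def by blast
  show ?thesis using h[rule_format, of r c] a by auto
qed
lemma card_rows: "c \<in> {1..n} \<Longrightarrow> card (rows c) = 2" using M by (simp add: Lambda2_def rows_def)
lemma card_cols: "r \<in> {1..n} \<Longrightarrow> card (cols r) = 2" using M by (simp add: Lambda2_def cols_def)

lemma FF_iff: "(c, r) \<in> FF \<longleftrightarrow> M r c = 1" using M_out by (auto simp: FF_def)
lemma rows_iff: "r \<in> rows c \<longleftrightarrow> M r c = 1" using M_out by (auto simp: rows_def)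
lemma cols_iff: "c \<in> cols r \<longleftrightarrow> M r c = 1" using M_out by (auto simp: cols_def)

lemma finite_FF: "finite FF"
proof -
  have "FF \<subseteq> {1..n} \<times> {1..n}" by (auto simp: FF_def)
  then show ?thesis by (rule finite_subset) simp
qed

lemma orow_props:
  assumes "M r c = 1"
  shows "orow c r \<in> rows c" "orow c r \<noteq> r" "rows c = {r, orow c r}"
    "\<And>r'. r' \<in> rows c \<Longrightarrow> r' \<noteq> r \<Longrightarrow> orow c r = r'"
proof -
  have c: "card (rows c) = 2" using card_rows M_out assms by blast
  have r: "r \<in> rows c" using assms rows_iff by simp
  show "orow c r \<in> rows c" unfolding orow_def by (rule other2(1)[OF c r])
  show "orow c r \<noteq> r" unfolding orow_def by (rule other2(2)[OF c r])
  show "rows c = {r, orow c r}" unfolding orow_def by (rule other2(3)[OF c r])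
  show "\<And>r'. r' \<in> rows c \<Longrightarrow> r' \<noteq> r \<Longrightarrow> orow c r = r'"
    unfolding orow_def by (rule other2(4)[OF c r])
qed

lemma ocol_props:
  assumes "M r c = 1"
  shows "ocol r c \<in> cols r" "ocol r c \<noteq> c" "cols r = {c, ocol r c}"
    "\<And>c'. c' \<in> cols r \<Longrightarrow> c' \<noteq> c \<Longrightarrow> ocol r c = c'"
proof -
  have c: "card (cols r) = 2" using card_cols M_out assms by blast
  have r: "c \<in> cols r" using assms cols_iff by simp
  show "ocol r c \<in> cols r" unfolding ocol_def by (rule other2(1)[OF c r])
  show "ocol r c \<noteq> c" unfolding ocol_def by (rule other2(2)[OF c r])
  show "cols r = {c, ocol r c}" unfolding ocol_def by (rule other2(3)[OF c r])
  show "\<And>c'. c' \<in> cols r \<Longrightarrow> c' \<noteq> c \<Longrightarrow> ocol r c = c'"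
    unfolding ocol_def by (rule other2(4)[OF c r])
qed

lemma step_FF: "x \<in> FF \<Longrightarrow> step x \<in> FF"
proof -
  assume x: "x \<in> FF"
  obtain c r where cr: "x = (c, r)" by (cases x)
  have m: "M r c = 1" using x cr FF_iff by simp
  have m2: "M (orow c r) c = 1" using orow_props(1)[OF m] rows_iff by simp
  have "M (orow c r) (ocol (orow c r) c) = 1" using ocol_props(1)[OF m2] cols_iff by simp
  then show "step x \<in> FF" using cr by (simp add: step_def FF_iff)
qed

lemma step_inj: "inj_on step FF"
proof (rule inj_onI)
  fix x y assume x: "x \<in> FF" and y: "y \<in> FF" and e: "step x = step y"
  obtain c r where cr: "x = (c, r)" by (cases x)
  obtain c' r' where cr': "y = (c', r')" by (cases y)
  have m: "M r c = 1" "M r' c' = 1" using x y cr cr' FF_iff by auto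
  define s where "s = orow c r"
  have s': "orow c' r' = s" using e cr cr' by (simp add: step_def s_def)
  have ms: "M s c = 1" "M s c' = 1" using orow_props(1)[OF m(1)] orow_props(1)[OF m(2)] rows_iff s' s_def by auto
  have oc: "ocol s c = ocol s c'" using e cr cr' s' by (simp add: step_def s_def)
  have cc: "c = c'"
  proof (rule ccontr)
    assume ne: "c \<noteq> c'"
    have "ocol s c = c'" using ocol_props(4)[OF ms(1)] ms(2) cols_iff ne by auto
    moreover have "ocol s c' = c" using ocol_props(4)[OF ms(2)] ms(1) cols_iff ne by auto
    ultimately show False using oc ne by simp
  qed
  have "orow c s = r" using orow_props(4)[OF ms(1)] orow_props(1,2)[OF m(1)] rows_iff m(1) s_def by auto
  moreover have "orow c' s = r'" using orow_props(4)[OF ms(2)] orow_props(1,2)[OF m(2)] rows_iff m(2) s' by auto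
  ultimately show "x = y" using cr cr' cc by simp
qed

lemma funpow_FF: "x \<in> FF \<Longrightarrow> (step ^^ i) x \<in> FF"
  by (induction i) (auto intro: step_FF)

lemma funpow_inj: "x \<in> FF \<Longrightarrow> y \<in> FF \<Longrightarrow> (step ^^ i) x = (step ^^ i) y \<Longrightarrow> x = y"
proof (induction i)
  case 0 then show ?case by simp
next
  case (Suc i)
  then show ?case using step_inj funpow_FF by (simp add: inj_on_def)
qed

definition wk where "wk c0 r0 j = (step ^^ j) (c0, r0)"
definition per where "per c0 r0 = (LEAST p. 0 < p \<and> wk c0 r0 p = wk c0 r0 0)"
definition CLw where "CLw c0 r0 = map (\<lambda>j. fst (wk c0 r0 j)) [0..<per c0 r0]"
definition ALw where "ALw c0 r0 = map (\<lambda>j. snd (wk c0 r0 j)) [0..<per c0 r0]"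

definition E where "E = {(c, c'). c \<in> {1..n} \<and> c' \<in> {1..n} \<and> (c, c') \<in> (cadj n M)\<^sup>*}"
definition CPc where "CPc = {1..n} // E"

end

locale walk = lam +
  fixes c0 r0 :: nat
  assumes start: "M r0 c0 = 1"
begin

abbreviation "cc j \<equiv> fst (wk c0 r0 j)"
abbreviation "aa j \<equiv> snd (wk c0 r0 j)"
abbreviation "P \<equiv> per c0 r0"

lemma st: "(c0, r0) \<in> FF" using start FF_iff by simp

lemma wk_FF: "wk c0 r0 j \<in> FF" unfolding wk_def using funpow_FF[OF st] .

lemma wk_M: "M (aa j) (cc j) = 1" using wk_FF[of j] FF_iff[of "cc j" "aa j"] by simp

lemma wk_Suc: "wk c0 r0 (Suc j) = step (wk c0 r0 j)" by (simp add: wk_def)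

lemma a_Suc: "aa (Suc j) = orow (cc j) (aa j)" by (simp add: wk_Suc step_def)
lemma c_Suc: "cc (Suc j) = ocol (aa (Suc j)) (cc j)" by (simp add: wk_Suc step_def)

lemma rows_c: "rows (cc j) = {aa j, aa (Suc j)} \<and> aa j \<noteq> aa (Suc j)"
  using orow_props(2,3)[OF wk_M[of j]] a_Suc by simp

lemma M_next: "M (aa (Suc j)) (cc j) = 1"
  using orow_props(1)[OF wk_M[of j]] a_Suc rows_iff by simp

lemma cols_a: "cols (aa (Suc j)) = {cc j, cc (Suc j)} \<and> cc j \<noteq> cc (Suc j)"
  using ocol_props(2,3)[OF M_next[of j]] c_Suc by simp

lemma wk0: "wk c0 r0 0 = (c0, r0)" by (simp add: wk_def)

lemma ex_period: "\<exists>p>0. wk c0 r0 p = wk c0 r0 0"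
proof -
  have sub: "wk c0 r0 ` {0..card FF} \<subseteq> FF" using wk_FF by auto
  have "\<not> inj_on (wk c0 r0) {0..card FF}"
  proof
    assume "inj_on (wk c0 r0) {0..card FF}"
    then have "card {0..card FF} \<le> card FF" using card_inj_on_le[OF _ sub finite_FF] by blast
    then show False by simp
  qed
  then obtain i j where ij: "i \<noteq> j" "wk c0 r0 i = wk c0 r0 j" unfolding inj_on_def by blast
  have "\<exists>i j. i < j \<and> wk c0 r0 i = wk c0 r0 j"
  proof (cases "i < j")
    case True then show ?thesis using ij by blast
  next
    case False then have "j < i" using ij by simp
    then show ?thesis using ij(2) by (intro exI[of _ j] exI[of _ i]) simp
  qed
  then obtain i j where ij: "i < j" "wk c0 r0 i = wk c0 r0 j" by blast
  have "wk c0 r0 j = (step ^^ (i + (j - i))) (c0, r0)" using ij(1) by (simp add: wk_def)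
  also have "\<dots> = (step ^^ i) (wk c0 r0 (j - i))" by (simp only: funpow_add o_apply wk_def)
  finally have "wk c0 r0 j = (step ^^ i) (wk c0 r0 (j - i))" .
  moreover have "wk c0 r0 i = (step ^^ i) (wk c0 r0 0)" by (simp add: wk_def)
  ultimately have "(step ^^ i) (wk c0 r0 (j - i)) = (step ^^ i) (wk c0 r0 0)" using ij(2) by simp
  then have "wk c0 r0 (j - i) = wk c0 r0 0" by (rule funpow_inj[OF wk_FF wk_FF])
  then show ?thesis using ij(1) by (intro exI[of _ "j - i"]) simp
qed

lemma per: "0 < P" "wk c0 r0 P = wk c0 r0 0"
  using LeastI_ex[OF ex_period] by (simp_all add: per_def)

lemma per_min: "0 < q \<Longrightarrow> q < P \<Longrightarrow> wk c0 r0 q \<noteq> wk c0 r0 0"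
  using not_less_Least per_def by auto

lemma wk_add: "wk c0 r0 (j + P) = wk c0 r0 j"
proof -
  have "wk c0 r0 (j + P) = (step ^^ j) (wk c0 r0 P)" by (simp add: wk_def funpow_add)
  then show ?thesis using per(2) by (simp add: wk_def)
qed

lemma wk_mult: "wk c0 r0 (m * P + j) = wk c0 r0 j"
proof (induction m)
  case 0 then show ?case by simp
next
  case (Suc m)
  have "wk c0 r0 (Suc m * P + j) = wk c0 r0 ((m * P + j) + P)"
    by (rule arg_cong[where f = "wk c0 r0"]) simp
  also have "\<dots> = wk c0 r0 (m * P + j)" by (rule wk_add)
  also have "\<dots> = wk c0 r0 j" by (rule Suc.IH)
  finally show ?case .
qed

lemma wk_mod: "wk c0 r0 j = wk c0 r0 (j mod P)"
  using wk_mult[of "j div P" "j mod P"] by (metis div_mult_mod_eq)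

lemma wk_dist: "i < j \<Longrightarrow> j < P \<Longrightarrow> wk c0 r0 i \<noteq> wk c0 r0 j"
proof
  assume ij: "i < j" "j < P" "wk c0 r0 i = wk c0 r0 j"
  have "wk c0 r0 j = (step ^^ (i + (j - i))) (c0, r0)" using ij(1) by (simp add: wk_def)
  also have "\<dots> = (step ^^ i) (wk c0 r0 (j - i))" by (simp only: funpow_add o_apply wk_def)
  finally have "wk c0 r0 j = (step ^^ i) (wk c0 r0 (j - i))" .
  moreover have "wk c0 r0 i = (step ^^ i) (wk c0 r0 0)" by (simp add: wk_def)
  ultimately have "(step ^^ i) (wk c0 r0 (j - i)) = (step ^^ i) (wk c0 r0 0)" using ij(3) by simp
  then have "wk c0 r0 (j - i) = wk c0 r0 0" by (rule funpow_inj[OF wk_FF wk_FF])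
  then show False using per_min[of "j - i"] ij by simp
qed

lemma per2: "P \<ge> 2"
proof (rule ccontr)
  assume "\<not> P \<ge> 2"
  then have "P = 1" using per(1) by simp
  then have "wk c0 r0 1 = wk c0 r0 0" using per(2) by simp
  then show False using rows_c[of 0] by simp
qed

lemma rev: "cc i = cc (i + d) \<Longrightarrow> aa (i + d) = aa (Suc i) \<Longrightarrow> False"
proof (induction d arbitrary: i rule: less_induct)
  case (less d)
  show ?case
  proof (cases d)
    case 0 then show ?thesis using less.prems rows_c[of i] by simp
  next
    case (Suc d1)
    show ?thesis
    proof (cases d1)
      case 0 then show ?thesis using less.prems cols_a[of i] Suc by simp
    next
      case (Suc e)
      have d: "d = Suc (Suc e)" using Suc \<open>d = Suc d1\<close> by simp
      have i1: "i + d = Suc (Suc (i + e))" using d by simp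
      have A: "cols (aa (Suc (Suc (i + e)))) = {cc (Suc (i + e)), cc (Suc (Suc (i + e)))}"
           "cc (Suc (i + e)) \<noteq> cc (Suc (Suc (i + e)))" using cols_a[of "Suc (i + e)"] by auto
      have B: "cols (aa (Suc i)) = {cc i, cc (Suc i)}" "cc i \<noteq> cc (Suc i)" using cols_a[of i] by auto
      have e1: "cc (Suc (Suc (i + e))) = cc i" "aa (Suc (Suc (i + e))) = aa (Suc i)"
        using less.prems i1 by auto
      have "{cc (Suc (i + e)), cc i} = {cc i, cc (Suc i)}" using A(1) B(1) e1 by simp
      then have c1: "cc (Suc (i + e)) = cc (Suc i)"
        using pair_other A(2) B(2) e1 by auto
      have C: "rows (cc (Suc (i + e))) = {aa (Suc (i + e)), aa (Suc (Suc (i + e)))}"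
           "aa (Suc (i + e)) \<noteq> aa (Suc (Suc (i + e)))" using rows_c[of "Suc (i + e)"] by auto
      have D: "rows (cc (Suc i)) = {aa (Suc i), aa (Suc (Suc i))}" "aa (Suc i) \<noteq> aa (Suc (Suc i))"
        using rows_c[of "Suc i"] by auto
      have "{aa (Suc (i + e)), aa (Suc i)} = {aa (Suc i), aa (Suc (Suc i))}" using C(1) D(1) e1 c1 by simp
      then have a1: "aa (Suc (i + e)) = aa (Suc (Suc i))"
        using pair_other C(2) D(2) e1 by auto
      show ?thesis
        using less.IH[of e "Suc i"] d c1 a1 by simp
    qed
  qed
qed

lemma c_dist: "i < j \<Longrightarrow> j < P \<Longrightarrow> cc i \<noteq> cc j"
proof
  assume ij: "i < j" "j < P" "cc i = cc j"
  have "aa i \<noteq> aa j"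
  proof
    assume "aa i = aa j"
    then have "wk c0 r0 i = wk c0 r0 j" using ij(3) by (simp add: prod_eq_iff)
    then show False using wk_dist[OF ij(1,2)] by simp
  qed
  moreover have "aa j \<in> rows (cc j)" using rows_c[of j] by simp
  ultimately have "aa j = aa (Suc i)" using rows_c[of i] ij(3) by auto
  then show False using rev[of i "j - i"] ij by simp
qed

lemma cc_per: "cc P = cc 0" "aa P = aa 0" using per(2) by auto

lemma a_dist1: "i < j \<Longrightarrow> j < P \<Longrightarrow> aa (Suc i) \<noteq> aa (Suc j)"
proof
  assume ij: "i < j" "j < P" "aa (Suc i) = aa (Suc j)"
  have A: "{cc i, cc (Suc i)} = {cc j, cc (Suc j)}" using cols_a[of i] cols_a[of j] ij(3) by simp
  have ne: "cc i \<noteq> cc j" using c_dist ij by simp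
  then have e1: "cc i = cc (Suc j)" "cc (Suc i) = cc j" using A by (auto simp: doubleton_eq_iff)
  show False
  proof (cases "Suc j < P")
    case True then show False using c_dist[of i "Suc j"] e1 ij by simp
  next
    case False
    then have sj: "Suc j = P" using ij by simp
    then have "cc i = cc 0" using e1 cc_per by simp
    then have i0: "i = 0" using c_dist[of 0 i] ij by (cases "i = 0") auto
    have j1: "j = 1"
    proof (rule ccontr)
      assume "j \<noteq> 1"
      then have "1 < j" using ij i0 by simp
      then show False using c_dist[of 1 j] e1 i0 ij by simp
    qed
    have "aa 1 = aa 0" using ij(3) i0 j1 sj cc_per by simp
    then show False using rows_c[of 0] by simp
  qed
qed

lemma a_dist: "i < j \<Longrightarrow> j < P \<Longrightarrow> aa i \<noteq> aa j"
proof (cases i)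
  case 0
  assume ij: "i < j" "j < P"
  have "aa (Suc (j - 1)) \<noteq> aa (Suc (P - 1))" using a_dist1[of "j - 1" "P - 1"] ij by simp
  then show ?thesis using 0 ij cc_per by simp
next
  case (Suc i')
  assume ij: "i < j" "j < P"
  then obtain j' where "j = Suc j'" by (cases j) auto
  then show ?thesis using a_dist1[of i' j'] ij Suc by simp
qed

lemma len: "length (CLw c0 r0) = P" "length (ALw c0 r0) = P"
  by (simp_all add: CLw_def ALw_def)

lemma nthC: "j < P \<Longrightarrow> CLw c0 r0 ! j = cc j" by (simp add: CLw_def)
lemma nthA: "j < P \<Longrightarrow> ALw c0 r0 ! j = aa j" by (simp add: ALw_def)

lemma distCw: "distinct (CLw c0 r0)"
  unfolding distinct_conv_nth len
proof (intro allI impI)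
  fix i j assume ij: "i < P" "j < P" "i \<noteq> j"
  show "CLw c0 r0 ! i \<noteq> CLw c0 r0 ! j"
  proof (cases "i < j")
    case True then show ?thesis using c_dist[of i j] ij nthC by simp
  next
    case False then have "j < i" using ij by simp
    then show ?thesis using c_dist[of j i] ij nthC by auto
  qed
qed

lemma distAw: "distinct (ALw c0 r0)"
  unfolding distinct_conv_nth len
proof (intro allI impI)
  fix i j assume ij: "i < P" "j < P" "i \<noteq> j"
  show "ALw c0 r0 ! i \<noteq> ALw c0 r0 ! j"
  proof (cases "i < j")
    case True then show ?thesis using a_dist[of i j] ij nthA by simp
  next
    case False then have "j < i" using ij by simp
    then show ?thesis using a_dist[of j i] ij nthA by auto
  qed
qed

lemma cc_mod: "cc j = cc (j mod P)" "aa j = aa (j mod P)" using wk_mod by auto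

lemma cc_in: "cc j \<in> set (CLw c0 r0)"
proof -
  have "j mod P < P" using per(1) by simp
  then have "CLw c0 r0 ! (j mod P) \<in> set (CLw c0 r0)" using len by simp
  then show ?thesis using nthC[of "j mod P"] cc_mod(1)[of j] \<open>j mod P < P\<close> by simp
qed

lemma aa_in: "aa j \<in> set (ALw c0 r0)"
proof -
  have "j mod P < P" using per(1) by simp
  then have "ALw c0 r0 ! (j mod P) \<in> set (ALw c0 r0)" using len by simp
  then show ?thesis using nthA[of "j mod P"] cc_mod(2)[of j] \<open>j mod P < P\<close> by simp
qed

lemma inC: "c \<in> set (CLw c0 r0) \<Longrightarrow> \<exists>j. c = cc j"
  by (auto simp: CLw_def)

lemma inA: "r \<in> set (ALw c0 r0) \<Longrightarrow> \<exists>j. r = aa (Suc j)"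
proof -
  assume "r \<in> set (ALw c0 r0)"
  then obtain j where j: "r = aa j" by (auto simp: ALw_def)
  have "Suc (j + P - 1) = j + P" using per(1) by simp
  then have "aa j = aa (Suc (j + P - 1))" using wk_add[of j] by simp
  then show ?thesis using j by blast
qed

lemma rows_sub: "c \<in> set (CLw c0 r0) \<Longrightarrow> rows c \<subseteq> set (ALw c0 r0)"
  using inC rows_c aa_in by fastforce

lemma cols_sub: "r \<in> set (ALw c0 r0) \<Longrightarrow> cols r \<subseteq> set (CLw c0 r0)"
  using inA cols_a cc_in by fastforce

lemma rows_list: "j < P \<Longrightarrow> rows (CLw c0 r0 ! j) = {ALw c0 r0 ! j, ALw c0 r0 ! ((j + 1) mod P)}"
proof -
  assume j: "j < P"
  have "(j + 1) mod P < P" using per(1) by simp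
  then have "ALw c0 r0 ! ((j + 1) mod P) = aa (Suc j)" using nthA cc_mod(2)[of "Suc j"] by simp
  then show ?thesis using rows_c[of j] nthC[OF j] nthA[OF j] by simp
qed

lemma comp_walk: "set (CLw c0 r0) = ccomp n M c0"
proof
  show "set (CLw c0 r0) \<subseteq> ccomp n M c0"
  proof
    fix c assume "c \<in> set (CLw c0 r0)"
    then obtain j where j: "c = cc j" using inC by blast
    have "(c0, cc j) \<in> (cadj n M)\<^sup>*" for j
    proof (induction j)
      case 0 then show ?case using wk0 by simp
    next
      case (Suc j)
      have st: "(cc j, cc (Suc j)) \<in> cadj n M"
        using M_next[of j] wk_M[of "Suc j"] M_out[OF M_next[of j]] M_out[OF wk_M[of "Suc j"]]
        unfolding cadj_def by blast
      show ?case by (rule rtrancl_into_rtrancl[OF Suc.IH st])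
    qed
    then show "c \<in> ccomp n M c0" using j by (simp add: ccomp_def)
  qed
next
  show "ccomp n M c0 \<subseteq> set (CLw c0 r0)"
  proof
    fix z assume "z \<in> ccomp n M c0"
    then have "(c0, z) \<in> (cadj n M)\<^sup>*" by (simp add: ccomp_def)
    then show "z \<in> set (CLw c0 r0)"
    proof (induction rule: rtrancl_induct)
      case base then show ?case using cc_in[of 0] wk0 by simp
    next
      case (step y z)
      then obtain r where r: "M r y = 1" "M r z = 1" by (auto simp: cadj_def)
      have "r \<in> set (ALw c0 r0)" using rows_sub[OF step.IH] r rows_iff by blast
      then show ?case using cols_sub r cols_iff by blast
    qed
  qed
qed

lemma first: "CLw c0 r0 ! 0 = c0" "ALw c0 r0 ! 0 = r0" "ALw c0 r0 ! 1 = orow c0 r0"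
  using nthC[of 0] nthA[of 0] nthA[of 1] per2 wk0 a_Suc[of 0] by auto

end


lemma walk_ALw_in: "walk n M c0 r0 \<Longrightarrow> set (lam.ALw n M c0 r0) \<subseteq> {1..n}"
proof -
  assume W: "walk n M c0 r0"
  interpret W: walk n M c0 r0 by (rule W)
  show ?thesis
  proof
    fix r assume "r \<in> set (W.ALw c0 r0)"
    then obtain j where "r = W.aa j" by (auto simp: W.ALw_def)
    then show "r \<in> {1..n}" using W.wk_M[of j] W.M_out by blast
  qed
qed

context lam begin

lemma cadj_sym: "(x, y) \<in> (cadj n M)\<^sup>* \<Longrightarrow> (y, x) \<in> (cadj n M)\<^sup>*"
  using sym_cadj by (metis sym_conv_converse_eq rtrancl_converseI converse_iff)

lemma equivE: "equiv {1..n} E"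
proof (rule equivI)
  show "E \<subseteq> {1..n} \<times> {1..n}" by (auto simp: E_def)
  show "refl_on {1..n} E" by (rule refl_onI) (auto simp: E_def)
  show "sym E" using cadj_sym by (auto simp: E_def sym_def)
  show "trans E" by (auto simp: E_def trans_def)
qed

lemma CPc_part: "partition_on {1..n} CPc"
  unfolding CPc_def by (rule partition_on_quotient[OF equivE])

lemma ccomp_sub: "c \<in> {1..n} \<Longrightarrow> ccomp n M c \<subseteq> {1..n}"
  by (auto simp: ccomp_def cadj_def elim: rtranclE)

lemma Ecomp: assumes c: "c \<in> {1..n}" shows "E``{c} = ccomp n M c"
proof -
  have s: "ccomp n M c \<subseteq> {1..n}" by (rule ccomp_sub[OF c])
  show ?thesis
  proof
    show "E``{c} \<subseteq> ccomp n M c" by (auto simp: E_def ccomp_def)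
    show "ccomp n M c \<subseteq> E``{c}"
    proof
      fix x assume x: "x \<in> ccomp n M c"
      then have "x \<in> {1..n}" using s by blast
      then show "x \<in> E``{c}" using x c by (simp add: E_def ccomp_def)
    qed
  qed
qed

lemma B_facts:
  assumes B: "B \<in> CPc"
  shows "Min B \<in> {1..n}" "Min B \<in> B" "B = ccomp n M (Min B)"
proof -
  obtain x where x: "B = E``{x}" "x \<in> {1..n}" using B unfolding CPc_def by (rule quotientE)
  have fin: "finite B" "B \<noteq> {}" "B \<subseteq> {1..n}" using part_facts(2,3,4)[OF CPc_part B] by auto
  show m: "Min B \<in> B" using fin by simp
  then show m1: "Min B \<in> {1..n}" using fin(3) by blast
  have "(x, Min B) \<in> E" using m x by simp
  then have "E``{x} = E``{Min B}" by (rule equiv_class_eq[OF equivE])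
  then show "B = ccomp n M (Min B)" using x Ecomp[OF m1] by simp
qed

definition r0B where "r0B B = Min (rows (Min B))"

lemma walkB: assumes B: "B \<in> CPc" shows "walk n M (Min B) (r0B B)"
proof -
  have "card (rows (Min B)) = 2" using card_rows B_facts(1)[OF B] by simp
  then have "finite (rows (Min B))" "rows (Min B) \<noteq> {}" by (auto simp: card_ge_0_finite)
  then have "r0B B \<in> rows (Min B)" by (simp add: r0B_def)
  then have h: "M (r0B B) (Min B) = 1" using rows_iff by simp
  show ?thesis using M h by (simp add: walk_def walk_axioms_def lam_def)
qed

definition CLB where "CLB B = CLw (Min B) (r0B B)"
definition ALB where "ALB B = ALw (Min B) (r0B B)"
definition rsB where "rsB B = set (ALB B)"
definition APc where "APc = rsB ` CPc"

lemma BF: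
  assumes B: "B \<in> CPc"
  shows "set (CLB B) = B" "distinct (CLB B)" "length (CLB B) = card B" "card B \<ge> 2"
    "distinct (ALB B)" "length (ALB B) = card B" "card (rsB B) = card B"
    "CLB B ! 0 = Min B" "ALB B ! 0 < ALB B ! 1"
    "\<And>c. c \<in> B \<Longrightarrow> rows c \<subseteq> rsB B" "\<And>r. r \<in> rsB B \<Longrightarrow> cols r \<subseteq> B"
    "\<And>j. j < card B \<Longrightarrow> rows (CLB B ! j) = {ALB B ! j, ALB B ! ((j + 1) mod card B)}"
    "rsB B \<subseteq> {1..n}"
proof -
  interpret W: walk n M "Min B" "r0B B" by (rule walkB[OF B])
  show s: "set (CLB B) = B" using W.comp_walk B_facts(3)[OF B] by (simp add: CLB_def)
  show d: "distinct (CLB B)" using W.distCw by (simp add: CLB_def)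
  have lc: "length (CLB B) = W.P" using W.len by (simp add: CLB_def)
  show l: "length (CLB B) = card B" using s d distinct_card by metis
  then have PB: "W.P = card B" using lc by simp
  show "card B \<ge> 2" using W.per2 PB by simp
  show dA: "distinct (ALB B)" using W.distAw by (simp add: ALB_def)
  show lA: "length (ALB B) = card B" using W.len PB by (simp add: ALB_def)
  show "card (rsB B) = card B" using dA lA distinct_card by (metis rsB_def)
  show "CLB B ! 0 = Min B" using W.first by (simp add: CLB_def)
  have a0: "ALB B ! 0 = r0B B" "ALB B ! 1 = orow (Min B) (r0B B)" using W.first by (simp_all add: ALB_def)
  have o1: "orow (Min B) (r0B B) \<in> rows (Min B)" and o2: "orow (Min B) (r0B B) \<noteq> r0B B"
    using orow_props(1,2)[OF W.start] by auto
  have fin: "finite (rows (Min B))" using card_rows B_facts(1)[OF B] by (metis card.infinite zero_neq_numeral)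
  have le: "r0B B \<le> orow (Min B) (r0B B)"
    unfolding r0B_def by (rule Min_le[OF fin o1[unfolded r0B_def]])
  have "r0B B < orow (Min B) (r0B B)" using le o2 by linarith
  then show "ALB B ! 0 < ALB B ! 1" using a0 by simp
  show "\<And>c. c \<in> B \<Longrightarrow> rows c \<subseteq> rsB B" using W.rows_sub s by (simp add: CLB_def rsB_def ALB_def)
  show "\<And>r. r \<in> rsB B \<Longrightarrow> cols r \<subseteq> B" using W.cols_sub s by (simp add: CLB_def rsB_def ALB_def)
  show "\<And>j. j < card B \<Longrightarrow> rows (CLB B ! j) = {ALB B ! j, ALB B ! ((j + 1) mod card B)}"
    using W.rows_list PB by (simp add: CLB_def ALB_def)
  show "rsB B \<subseteq> {1..n}" using walk_ALw_in[OF walkB[OF B]] by (simp add: rsB_def ALB_def)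
qed

lemma rs_disj: assumes B: "B \<in> CPc" "B' \<in> CPc" "r \<in> rsB B" "r \<in> rsB B'" shows "B = B'"
proof -
  have r: "r \<in> {1..n}" using BF(13)[OF B(1)] B(3) by auto
  have "card (cols r) = 2" using card_cols r by simp
  then obtain c where "c \<in> cols r" by (metis card.empty ex_in_conv zero_neq_numeral)
  then have "c \<in> B" "c \<in> B'" using BF(11)[OF B(1) B(3)] BF(11)[OF B(2) B(4)] by auto
  then show ?thesis using part_disj[OF CPc_part B(1,2)] by blast
qed

lemma rs_inj: "inj_on rsB CPc"
proof (rule inj_onI)
  fix B B' assume B: "B \<in> CPc" "B' \<in> CPc" "rsB B = rsB B'"
  have "card (rsB B) \<ge> 2" using BF(4,7)[OF B(1)] by simp
  then obtain r where "r \<in> rsB B" by (metis card.empty ex_in_conv not_numeral_le_zero)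
  then show "B = B'" using rs_disj B by auto
qed

lemma APc_part: "partition_on {1..n} APc"
proof (rule partition_onI)
  show "\<Union>APc = {1..n}"
  proof
    show "\<Union>APc \<subseteq> {1..n}" using BF(13) by (auto simp: APc_def)
    show "{1..n} \<subseteq> \<Union>APc"
    proof
      fix r assume r: "r \<in> {1..n}"
      have "card (cols r) = 2" using card_cols r by simp
      then obtain c where c: "c \<in> cols r" by (metis card.empty ex_in_conv zero_neq_numeral)
      then have "c \<in> {1..n}" by (simp add: cols_def)
      then have "c \<in> \<Union>CPc" using CPc_part by (simp add: partition_on_def)
      then obtain B where B: "B \<in> CPc" "c \<in> B" by blast
      have "r \<in> rows c" using c rows_iff cols_iff by simp
      then have "r \<in> rsB B" using BF(10)[OF B(1,2)] by auto
      then show "r \<in> \<Union>APc" using B by (auto simp: APc_def)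
    qed
  qed
  show "\<And>p q. p \<in> APc \<Longrightarrow> q \<in> APc \<Longrightarrow> p \<noteq> q \<Longrightarrow> disjnt p q"
    using rs_disj by (auto simp: APc_def disjnt_def)
  show "{} \<notin> APc"
  proof
    assume "{} \<in> APc"
    then obtain B where "B \<in> CPc" "rsB B = {}" by (auto simp: APc_def)
    then show False using BF(4,7) by fastforce
  qed
qed

definition xsc where "xsc k = (if k \<in> {2..n} then card {B\<in>CPc. card B = k} else 0)"
definition cordc where "cordc k i = (if k \<in> {2..n} \<and> i \<in> {1..xsc k} then tl (CLB (blk CPc k i)) else [])"
definition aordc where "aordc k i = (if k \<in> {2..n} \<and> i \<in> {1..xsc k} then ALB (blk CPc k i) else [])"
definition rhoc where "rhoc k i = (if i \<in> {1..xsc k} then inv_into {1..xsc k} (blk APc k) (rsB (blk CPc k i)) else i)"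
definition Dc where "Dc = \<lparr>xs = xsc, CP = CPc, AP = APc, rho = rhoc, cord = cordc, aord = aordc\<rparr>"

lemma APk: "{B\<in>APc. card B = k} = rsB ` {B\<in>CPc. card B = k}"
  using BF(7) by (auto simp: APc_def)

lemma cardAP: "card {B\<in>APc. card B = k} = card {B\<in>CPc. card B = k}"
  unfolding APk by (rule card_image) (rule inj_on_subset[OF rs_inj], auto)

lemma bC: assumes k: "k \<in> {2..n}" shows "bij_betw (blk CPc k) {1..xsc k} {B\<in>CPc. card B = k}"
proof -
  have xk: "xsc k = card {B\<in>CPc. card B = k}" unfolding xsc_def if_P[OF k] ..
  show ?thesis unfolding xk by (rule blk_bij[OF CPc_part])
qed

lemma bA: assumes k: "k \<in> {2..n}" shows "bij_betw (blk APc k) {1..xsc k} {B\<in>APc. card B = k}"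
proof -
  have xk: "xsc k = card {B\<in>APc. card B = k}" unfolding xsc_def if_P[OF k] cardAP ..
  show ?thesis unfolding xk by (rule blk_bij[OF APc_part])
qed

lemma bR: "bij_betw rsB {B\<in>CPc. card B = k} {B\<in>APc. card B = k}"
  unfolding bij_betw_def APk using inj_on_subset[OF rs_inj] by auto

lemma rhoc_perm: "rhoc k permutes {1..xsc k}"
proof (cases "k \<in> {2..n}")
  case False
  have x: "xsc k = 0" unfolding xsc_def if_not_P[OF False] ..
  then show ?thesis by (intro bij_imp_permutes) (auto simp: rhoc_def bij_betw_def)
next
  case True
  have b: "bij_betw (inv_into {1..xsc k} (blk APc k) \<circ> (rsB \<circ> blk CPc k)) {1..xsc k} {1..xsc k}"
    by (rule bij_betw_trans[OF bij_betw_trans[OF bC[OF True] bR] bij_betw_inv_into[OF bA[OF True]]])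
  have "bij_betw (rhoc k) {1..xsc k} {1..xsc k}"
    by (rule bij_betw_cong[THEN iffD1, OF _ b]) (simp add: rhoc_def)
  then show ?thesis by (rule bij_imp_permutes) (simp only: rhoc_def if_not_P if_False)
qed

lemma Dc_in: "Dc \<in> Dn n"
proof -
  have s: "(\<Sum>k=2..n. k * xsc k) = n"
    using cards_sum[OF CPc_part] BF(4) by (simp add: xsc_def)
  have lists: "if k \<in> {2..n} \<and> i \<in> {1..xsc k}
        then distinct (cordc k i) \<and>
             set (cordc k i) = blk CPc k i - {Min (blk CPc k i)} \<and>
             distinct (aordc k i) \<and>
             set (aordc k i) = blk APc k (rhoc k i) \<and>
             aordc k i ! 0 < aordc k i ! 1
        else cordc k i = [] \<and> aordc k i = []" for k i
  proof (cases "k \<in> {2..n} \<and> i \<in> {1..xsc k}")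
    case False then show ?thesis unfolding cordc_def aordc_def if_not_P[OF False] by simp
  next
    case True
    define B where "B = blk CPc k i"
    have Bk: "B \<in> CPc" "card B = k" using bij_betw_apply[OF bC] True by (auto simp: B_def)
    have ne: "CLB B \<noteq> []" using BF(3,4)[OF Bk(1)] by auto
    obtain t where cl: "CLB B = Min B # t" using ne BF(8)[OF Bk(1)] by (cases "CLB B") auto
    have st: "set (tl (CLB B)) = B - {Min B}"
      using BF(1,2)[OF Bk(1)] cl by auto
    have rs: "rsB B \<in> blk APc k ` {1..xsc k}"
      using bij_betw_imp_surj_on[OF bA] True bR Bk bij_betw_apply by fastforce
    have "blk APc k (rhoc k i) = rsB B"
      using True f_inv_into_f[OF rs] by (simp add: rhoc_def B_def)
    then show ?thesis using BF(2,5,9)[OF Bk(1)] st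
      unfolding cordc_def aordc_def if_P[OF True] B_def[symmetric] by (simp add: distinct_tl rsB_def)
  qed
  have x0: "\<forall>k. k \<notin> {2..n} \<longrightarrow> xsc k = 0" by (simp add: xsc_def)
  have cc: "\<forall>k\<in>{2..n}. card {B\<in>CPc. card B = k} = xsc k" by (simp add: xsc_def)
  have ca: "\<forall>k\<in>{2..n}. card {B\<in>APc. card B = k} = xsc k" using cardAP by (simp add: xsc_def)
  have rp: "\<forall>k. rhoc k permutes {1..xsc k}" using rhoc_perm by blast
  have ls: "\<forall>k i. if k \<in> {2..n} \<and> i \<in> {1..xsc k}
        then distinct (cordc k i) \<and>
             set (cordc k i) = blk CPc k i - {Min (blk CPc k i)} \<and>
             distinct (aordc k i) \<and>
             set (aordc k i) = blk APc k (rhoc k i) \<and>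
             aordc k i ! 0 < aordc k i ! 1
        else cordc k i = [] \<and> aordc k i = []" using lists by blast
  show ?thesis unfolding Dn_def mem_Collect_eq Dc_def data.select_convs
    using x0 s CPc_part APc_part cc ca rp ls by blast
qed

lemma Phi_Dc: "Phi n Dc = M"
proof -
  interpret X: dn n Dc by (rule dn.intro[OF Dc_in])
  interpret F: fam n "Idx n Dc" fst "CLD Dc" "ALD Dc" by (rule X.is_fam)
  have CLD: "CLD Dc (k, i) = CLB (blk CPc k i)" "ALD Dc (k, i) = ALB (blk CPc k i)"
    if "(k, i) \<in> Idx n Dc" for k i
  proof -
    have ki: "k \<in> {2..n}" "i \<in> {1..xsc k}" using that by (auto simp: Idx_def Dc_def)
    define B where "B = blk CPc k i"
    have Bk: "B \<in> CPc" "card B = k" using bij_betw_apply[OF bC] ki by (auto simp: B_def)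
    have ne: "CLB B \<noteq> []" using BF(3,4)[OF Bk(1)] by auto
    obtain t where cl: "CLB B = Min B # t" using ne BF(8)[OF Bk(1)] by (cases "CLB B") auto
    show "CLD Dc (k, i) = CLB (blk CPc k i)"
      using cl ki by (simp add: CLD_def Dc_def cordc_def B_def[symmetric] del: One_nat_def)
    show "ALD Dc (k, i) = ALB (blk CPc k i)"
      using ki by (simp add: ALD_def Dc_def aordc_def)
  qed
  have rows_eq: "{r \<in> {1..n}. F.M r c = 1} = rows c" if c: "c \<in> {1..n}" for c
  proof -
    obtain p j where pj: "p \<in> Idx n Dc" "j < fst p" "CLD Dc p ! j = c" using F.CL_idx[OF c] by blast
    obtain k i where ki: "p = (k, i)" by (cases p)
    have ki2: "k \<in> {2..n}" "i \<in> {1..xsc k}" using pj(1) ki by (auto simp: Idx_def Dc_def)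
    define B where "B = blk CPc k i"
    have Bk: "B \<in> CPc" "card B = k" using bij_betw_apply[OF bC] ki2 by (auto simp: B_def)
    have "{r \<in> {1..n}. F.M r c = 1} = {ALD Dc p ! j, ALD Dc p ! ((j + 1) mod fst p)}"
      using F.rows_of[OF pj(1,2)] pj(3) by simp
    also have "\<dots> = rows (CLB B ! j)"
      using BF(12)[OF Bk(1), of j] pj ki Bk CLD[of k i] by (simp add: B_def)
    also have "\<dots> = rows c" using pj ki CLD[of k i] by (simp add: B_def)
    finally show ?thesis .
  qed
  show ?thesis
  proof (intro ext)
    fix r c
    show "Phi n Dc r c = M r c"
    proof (cases "r \<in> {1..n} \<and> c \<in> {1..n}")
      case False
      then have "M r c = 0" using M_out M01 by (metis insert_iff singletonD)
      then show ?thesis using False F.M_out Phi_eq[of n Dc] by auto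
    next
      case True
      have "F.M r c = 1 \<longleftrightarrow> M r c = 1" using rows_eq[of c] True by (auto simp: rows_def)
      then show ?thesis using F.M01[of r c] M01[of r c] Phi_eq[of n Dc] by auto
    qed
  qed
qed

lemma surj_main: "M \<in> Phi n ` Dn n"
  using Phi_Dc Dc_in by (metis image_eqI)

end

theorem theorem1:
  fixes n :: nat
  assumes "n \<ge> 2"
  shows "(\<forall>D\<in>Dn n. well_defined n D \<and> Phi n D \<in> Lambda2 n) \<and>
         inj_on (Phi n) (Dn n) \<and>
         Lambda2 n \<subseteq> Phi n ` Dn n"
proof (intro conjI ballI subsetI)
  fix D assume D: "D \<in> Dn n"
  interpret X: dn n D by (rule dn.intro[OF D])
  interpret F: fam n "Idx n D" fst "CLD D" "ALD D" by (rule X.is_fam)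
  show "well_defined n D" using F.wd by (simp add: well_defined_def Rtrip_eq)
  show "Phi n D \<in> Lambda2 n" using F.M_Lambda2 by (simp add: Phi_eq)
next
  show "inj_on (Phi n) (Dn n)" by (rule inj_Phi)
next
  fix M assume "M \<in> Lambda2 n"
  then show "M \<in> Phi n ` Dn n" by (rule lam.surj_main[OF lam.intro])
qed

end
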